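(* Assume $\rho=0$ and let $x>0$. For $\epsilon\in(0,x)$ let $D^\epsilon$ be the dividend strategy that pays $x-\epsilon$ at time $0$ and thereafter, at each jump time of $J$, immediately pays out all surplus above the level $\epsilon$ (so the surplus is reset to $\epsilon$). Then in each of the three cases (a) infinite horizon with $\delta>0$, with target value $x+\frac{\lambda\mathbb{E}[Y_1]}{\delta}=\sup_{D\in\mathcal{D}}\mathbb{E}_x[\int_0^\tau e^{-\delta t}dD_t]$; (b) horizon $T>0$ with $\delta>0$, with target value $\sup_{D\in\mathcal{D}}\mathbb{E}_x[\int_0^{T\wedge\tau} e^{-\delta t}dD_t]$; (c) horizon $T>0$ with $\delta=0$, with target value $\sup_{D\in\mathcal{D}}\mathbb{E}_x[\int_0^{T\wedge\tau}dD_t]$; the following holds: for every $\varepsilon>0$ there exists $\epsilon>0$ such that the expected (discounted) dividends under $D^\epsilon$ over the corresponding horizon are within $\varepsilon$ of the corresponding supremum.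
   Context: Dual risk model with zero running cost: $\lambda>0$; $N_t$ is a Poisson process with intensity $\lambda$ and $J_t=\sum_{i=1}^{N_t}Y_i$, where $Y_i$ are i.i.d. positive random variables with common density $p(y)$, $y>0$, $\mathbb{E}[Y_1]<\infty$, independent of $N$. Given a dividend strategy $D$, the surplus is $X_t=x-D_t+J_t$, $X_0=x>0$. $\mathcal{D}$ is the set of admissible dividend strategies: all adapted nondecreasing càdlàg processes $D$ ($D_t$ is the cumulative dividend paid up to time $t$). The ruin time is $\tau=\inf\{t>0:X_t\le 0\}$. $\mathbb{E}_x$ denotes expectation with $X_0=x$. *)

theory Defs
  imports "HOL-Probability.Probability"
begin

text \<open>Dual risk model built from i.i.d. exponential inter-arrival times W and
  i.i.d. positive claim sizes Y (all mutually independent).\<close>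

text \<open>Arrival time of the (n+1)-th jump of the Poisson process.\<close>
definition arrival :: "(nat \<Rightarrow> 'a \<Rightarrow> real) \<Rightarrow> nat \<Rightarrow> 'a \<Rightarrow> real" where
  "arrival W n \<omega> = (\<Sum>i\<le>n. W i \<omega>)"

definition cpp :: "(nat \<Rightarrow> 'a \<Rightarrow> real) \<Rightarrow> (nat \<Rightarrow> 'a \<Rightarrow> real) \<Rightarrow> 'a \<Rightarrow> real \<Rightarrow> real" where
  "cpp W Y \<omega> t = (\<Sum>n\<in>{n. arrival W n \<omega> \<le> t}. Y n \<omega>)"

definition natfilt :: "'a measure \<Rightarrow> ('a \<Rightarrow> real \<Rightarrow> real) \<Rightarrow> real \<Rightarrow> 'a measure" where
  "natfilt M J t = sigma (space M)
     {(\<lambda>\<omega>. J \<omega> s) -` B \<inter> space M | s B. s \<in> {0..t} \<and> B \<in> sets borel}"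

definition surplus :: "real \<Rightarrow> ('a \<Rightarrow> real \<Rightarrow> real) \<Rightarrow> ('a \<Rightarrow> real \<Rightarrow> real) \<Rightarrow> 'a \<Rightarrow> real \<Rightarrow> real" where
  "surplus x J D \<omega> t = x - D \<omega> t + J \<omega> t"

definition ruin_time :: "real \<Rightarrow> ('a \<Rightarrow> real \<Rightarrow> real) \<Rightarrow> ('a \<Rightarrow> real \<Rightarrow> real) \<Rightarrow> 'a \<Rightarrow> ereal" where
  "ruin_time x J D \<omega> = Inf {ereal t | t. 0 < t \<and> surplus x J D \<omega> t \<le> 0}"

text \<open>Admissible dividend strategies: adapted to the natural filtration of J,
  nondecreasing, cadlag paths on [0,oo), D_{0-} = 0 (so D_0 >= 0 is a lump at 0).\<close>
definition admissible :: "'a measure \<Rightarrow> ('a \<Rightarrow> real \<Rightarrow> real) \<Rightarrow> ('a \<Rightarrow> real \<Rightarrow> real) \<Rightarrow> bool" where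
  "admissible M J D \<longleftrightarrow>
     (\<forall>t\<ge>0. (\<lambda>\<omega>. D \<omega> t) \<in> borel_measurable (natfilt M J t)) \<and>
     (\<forall>\<omega>\<in>space M.
        0 \<le> D \<omega> 0 \<and> mono_on {0..} (D \<omega>) \<and>
        (\<forall>t\<ge>0. continuous (at_right t) (D \<omega>)) \<and>
        (\<forall>t>0. \<exists>l. (D \<omega> \<longlongrightarrow> l) (at_left t)))"

text \<open>Lebesgue--Stieltjes measure dD_t of a path (with D_{0-}=0, giving mass D_0 at 0).\<close>
definition stieltjes :: "(real \<Rightarrow> real) \<Rightarrow> real measure" where
  "stieltjes F = interval_measure (\<lambda>t. if t < 0 then 0 else F t)"

text \<open>Expected discounted dividends E_x[ int_{[0, H /\ tau)} e^{-delta t} dD_t ] with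
  horizon H (H = infinity for the infinite horizon; for finite horizon T the
  time T itself is included when T < tau).\<close>
definition div_value :: "'a measure \<Rightarrow> real \<Rightarrow> ('a \<Rightarrow> real \<Rightarrow> real) \<Rightarrow> real \<Rightarrow> ereal \<Rightarrow>
    ('a \<Rightarrow> real \<Rightarrow> real) \<Rightarrow> ennreal" where
  "div_value M x J \<delta> H D =
     (\<integral>\<^sup>+ \<omega>. (\<integral>\<^sup>+ t. indicator {t. 0 \<le> t \<and> ereal t \<le> H \<and> ereal t < ruin_time x J D \<omega>} t
                      * ennreal (exp (- \<delta> * t)) \<partial>stieltjes (D \<omega>)) \<partial>M)"

definition opt_value :: "'a measure \<Rightarrow> real \<Rightarrow> ('a \<Rightarrow> real \<Rightarrow> real) \<Rightarrow> real \<Rightarrow> ereal \<Rightarrow> ennreal" where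
  "opt_value M x J \<delta> H = (SUP D\<in>{D. admissible M J D}. div_value M x J \<delta> H D)"

text \<open>The strategy D^eps: pay x - eps at time 0, then at every jump pay all surplus
  above eps; i.e. D^eps_t = x - eps + J_t.\<close>
definition eps_strategy :: "real \<Rightarrow> real \<Rightarrow> ('a \<Rightarrow> real \<Rightarrow> real) \<Rightarrow> 'a \<Rightarrow> real \<Rightarrow> real" where
  "eps_strategy x \<epsilon> J \<omega> t = x - \<epsilon> + J \<omega> t"

end

theory Submission
  imports Defs
begin

lemma step_rcont:
  fixes s y :: "nat \<Rightarrow> real"
  assumes fin: "\<And>t. finite {n. s n \<le> t}"
  shows "continuous (at_right a) (\<lambda>t. \<Sum>n\<in>{n. s n \<le> t}. y n)"
proof -
  have f1: "finite {n. s n \<le> a + 1}" by (rule fin)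
  define P where "P = {n. s n \<le> a + 1 \<and> a < s n}"
  have fP: "finite P" using f1 unfolding P_def by (rule finite_subset[rotated]) auto
  define d where "d = Min (insert (a+1) (s ` P))"
  have d: "a < d" unfolding d_def using fP by (auto simp: P_def)
  have "\<forall>u. a < u \<and> u < d \<longrightarrow> {n. s n \<le> u} = {n. s n \<le> a}"
  proof (intro allI impI)
    fix u assume u: "a < u \<and> u < d"
    show "{n. s n \<le> u} = {n. s n \<le> a}"
    proof (rule set_eqI, rule iffI)
      fix n assume "n \<in> {n. s n \<le> u}"
      hence sn: "s n \<le> u" by simp
      show "n \<in> {n. s n \<le> a}"
      proof (rule ccontr)
        assume "n \<notin> {n. s n \<le> a}"
        hence "a < s n" by simp
        moreover have "s n \<le> a + 1"
        proof (rule ccontr)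
          assume "\<not> s n \<le> a + 1"
          moreover have "d \<le> a + 1" unfolding d_def using fP by auto
          ultimately show False using sn u by auto
        qed
        ultimately have "n \<in> P" unfolding P_def by auto
        hence "d \<le> s n" unfolding d_def using fP by auto
        thus False using sn u by auto
      qed
    qed (use u in auto)
  qed
  hence ev: "eventually (\<lambda>u. (\<Sum>n\<in>{n. s n \<le> u}. y n) = (\<Sum>n\<in>{n. s n \<le> a}. y n)) (at_right a)"
    unfolding eventually_at_right_field using d by metis
  show ?thesis unfolding continuous_within
    by (rule tendsto_eventually) (use ev in auto)
qed

lemma step_mono:
  fixes s y :: "nat \<Rightarrow> real"
  assumes fin: "\<And>t. finite {n. s n \<le> t}" and y0: "\<And>n. 0 \<le> y n"
  shows "a \<le> b \<Longrightarrow> (\<Sum>n\<in>{n. s n \<le> a}. y n) \<le> (\<Sum>n\<in>{n. s n \<le> b}. y n)"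
  by (rule sum_mono2) (use fin y0 in auto)

lemma step_measure:
  fixes s y :: "nat \<Rightarrow> real"
  assumes fin: "\<And>t. finite {n. s n \<le> t}" and y0: "\<And>n. 0 \<le> y n"
  shows "interval_measure (\<lambda>t. \<Sum>n\<in>{n. s n \<le> t}. y n)
       = distr (density (count_space UNIV) (\<lambda>n. ennreal (y n))) borel s"
    (is "interval_measure ?G = ?N")
proof (rule measure_eqI_generator_eq_countable[where E="range (\<lambda>(a, b). {a <.. b::real})"
        and \<Omega>=UNIV and A="range (\<lambda>n::nat. {- real n <.. real n})"])
  show "Int_stable (range (\<lambda>(a, b). {a <.. b::real}))"
    unfolding Int_stable_def
  proof (safe)
    fix a b c d :: real
    have "{a<..b} \<inter> {c<..d} = {max a c <.. min b d}" by auto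
    thus "{a<..b} \<inter> {c<..d} \<in> range (\<lambda>(a, b). {a <.. b::real})" by auto
  qed
  show "range (\<lambda>(a, b). {a <.. b::real}) \<subseteq> Pow UNIV" by auto
  show "sets (interval_measure ?G) = sigma_sets UNIV (range (\<lambda>(a, b). {a <.. b::real}))"
    by (simp add: borel_sigma_sets_Ioc)
  show "sets ?N = sigma_sets UNIV (range (\<lambda>(a, b). {a <.. b::real}))"
    by (simp add: borel_sigma_sets_Ioc)
  show "range (\<lambda>n::nat. {- real n <.. real n}) \<subseteq> range (\<lambda>(a, b). {a <.. b::real})" by auto
  show "\<Union> (range (\<lambda>n::nat. {- real n <.. real n})) = UNIV"
  proof safe
    fix x :: real
    obtain n :: nat where "\<bar>x\<bar> < n" using reals_Archimedean2 by blast
    thus "x \<in> \<Union> (range (\<lambda>n::nat. {- real n <.. real n}))" by (auto intro!: exI[of _ n])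
  qed auto
  show "countable (range (\<lambda>n::nat. {- real n <.. real n}))" by auto
  have mono: "\<And>a b. a \<le> b \<Longrightarrow> ?G a \<le> ?G b" using step_mono[OF fin y0] .
  have rc: "\<And>a. continuous (at_right a) ?G" using step_rcont[OF fin] .
  have eq: "emeasure (interval_measure ?G) {a<..b} = emeasure ?N {a<..b}" for a b
  proof (cases "a \<le> b")
    case True
    have fab: "finite {n. a < s n \<and> s n \<le> b}"
      by (rule finite_subset[OF _ fin[of b]]) auto
    have "emeasure ?N {a<..b} = emeasure (density (count_space UNIV) (\<lambda>n. ennreal (y n))) (s -` {a<..b})"
      by (subst emeasure_distr) auto
    also have "\<dots> = (\<integral>\<^sup>+n. ennreal (y n) * indicator (s -` {a<..b}) n \<partial>count_space UNIV)"
      by (subst emeasure_density) (auto simp: mult.commute)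
    also have "\<dots> = (\<integral>\<^sup>+n. ennreal (y n) \<partial>count_space {n. a < s n \<and> s n \<le> b})"
      by (subst nn_integral_count_space_indicator) (auto intro!: nn_integral_cong simp: indicator_def)
    also have "\<dots> = (\<Sum>n\<in>{n. a < s n \<and> s n \<le> b}. ennreal (y n))"
      using fab by (rule nn_integral_count_space_finite)
    also have "\<dots> = ennreal (\<Sum>n\<in>{n. a < s n \<and> s n \<le> b}. y n)"
      using y0 by (simp add: sum_ennreal)
    also have "(\<Sum>n\<in>{n. a < s n \<and> s n \<le> b}. y n) = ?G b - ?G a"
    proof -
      have "{n. s n \<le> b} = {n. s n \<le> a} \<union> {n. a < s n \<and> s n \<le> b}" using True by auto
      hence "?G b = ?G a + (\<Sum>n\<in>{n. a < s n \<and> s n \<le> b}. y n)"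
        by (simp add: sum.union_disjoint fin fab) (subst sum.union_disjoint, auto simp: fin fab)
      thus ?thesis by simp
    qed
    finally show ?thesis
      by (simp add: emeasure_interval_measure_Ioc[OF True mono rc])
  next
    case False thus ?thesis by simp
  qed
  thus "\<And>X. X \<in> range (\<lambda>(a, b). {a <.. b::real}) \<Longrightarrow> emeasure (interval_measure ?G) X = emeasure ?N X"
    by auto
  show "\<And>X. X \<in> range (\<lambda>n::nat. {- real n <.. real n}) \<Longrightarrow> emeasure (interval_measure ?G) X \<noteq> \<infinity>"
    by (auto simp: emeasure_interval_measure_Ioc[OF _ mono rc])
qed

definition path :: "(real \<Rightarrow> real) \<Rightarrow> bool" where
  "path F \<longleftrightarrow> 0 \<le> F 0 \<and> mono_on {0..} F \<and> (\<forall>t\<ge>0. continuous (at_right t) F)"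

definition ext0 :: "(real \<Rightarrow> real) \<Rightarrow> real \<Rightarrow> real" where
  "ext0 F = (\<lambda>t. if t < 0 then 0 else F t)"

lemma stieltjes_ext0: "stieltjes F = interval_measure (ext0 F)"
  by (simp add: stieltjes_def ext0_def)

lemma ext0_mono: assumes "path F" shows "a \<le> b \<Longrightarrow> ext0 F a \<le> ext0 F b"
  using assms unfolding path_def ext0_def mono_on_def
  by (cases "a < 0"; cases "b < 0") (auto, smt (verit) atLeast_iff)

lemma ext0_rc: assumes "path F" shows "continuous (at_right a) (ext0 F)"
proof (cases "a < 0")
  case True
  have "eventually (\<lambda>u. ext0 F u = ext0 F a) (at_right a)"
    unfolding eventually_at_right_field using True by (intro exI[of _ 0]) (auto simp: ext0_def)
  thus ?thesis unfolding continuous_within by (rule tendsto_eventually)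
next
  case False
  hence c: "continuous (at_right a) F" using assms by (auto simp: path_def)
  have "eventually (\<lambda>u. F u = ext0 F u) (at_right a)"
    unfolding eventually_at_right_field using False by (intro exI[of _ "a+1"]) (auto simp: ext0_def)
  moreover have "F a = ext0 F a" using False by (simp add: ext0_def)
  moreover have "(F \<longlongrightarrow> F a) (at_right a)" using c by (simp add: continuous_within)
  ultimately have "(ext0 F \<longlongrightarrow> ext0 F a) (at_right a)"
    using Lim_transform_eventually by metis
  thus ?thesis by (simp add: continuous_within)
qed

lemma sets_stieltjes[simp, measurable_cong]: "sets (stieltjes F) = sets borel"
  by (simp add: stieltjes_def)

lemma space_stieltjes[simp]: "space (stieltjes F) = UNIV"
  by (simp add: stieltjes_def)

lemma stieltjes_sigma_finite: "path F \<Longrightarrow> sigma_finite_measure (stieltjes F)"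
  unfolding stieltjes_ext0
  by (rule sigma_finite_interval_measure) (auto intro: ext0_mono ext0_rc)

lemma stieltjes_Icc0:
  assumes P: "path F" and b: "0 \<le> b"
  shows "emeasure (stieltjes F) {0..b} = ennreal (F b)"
proof -
  note mono = ext0_mono[OF P] and rc = ext0_rc[OF P]
  have m1: "emeasure (stieltjes F) {-1<..b} = ennreal (F b)"
    unfolding stieltjes_ext0 using b
    by (subst emeasure_interval_measure_Ioc[OF _ mono rc]) (auto simp: ext0_def)
  have null: "emeasure (stieltjes F) {-1<..<0} = 0"
  proof -
    have "{-1<..<(0::real)} = (\<Union>n::nat. {-1<..-1/(Suc n)})"
    proof safe
      fix x :: real assume x: "x \<in> {-1<..<0}"
      then obtain n :: nat where n: "1 / (- x) < n"
        using reals_Archimedean2 by blast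
      have xn: "0 < - x" using x by auto
      have "1 < n * (-x)" using pos_divide_less_eq[OF xn] n by blast
      hence "1 < (-x) * n" by (simp add: mult.commute)
      hence "1 < (-x) * Suc n" using xn
        by (smt (verit, best) mult_left_mono of_nat_Suc)
      hence "x * Suc n \<le> -1" by (simp add: algebra_simps)
      hence "x \<le> -1 / Suc n" by (metis of_nat_0_less_iff zero_less_Suc pos_le_divide_eq)
      thus "x \<in> (\<Union>n::nat. {-1<..-1/(Suc n)})" using x by auto
    next
      fix x n assume "x \<in> {-1<..-1/real (Suc n)}"
      hence "-1 < x" "x \<le> -1/real (Suc n)" by auto
      moreover have p: "0 < 1 / real (Suc n)" by simp
      ultimately have "x < 0" by linarith
      thus "x \<in> {-1<..<0}" using \<open>-1 < x\<close> by simp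
    qed
    moreover have "emeasure (stieltjes F) {-1<..-1/(Suc n)} = 0" for n
    proof -
      have "-1 \<le> -1 / real (Suc n)" by (auto simp: field_simps)
      thus ?thesis unfolding stieltjes_ext0
        by (subst emeasure_interval_measure_Ioc[OF _ mono rc]) (auto simp: ext0_def)
    qed
    moreover have "emeasure (stieltjes F) (\<Union>n::nat. {-1<..-1/(Suc n)}) = 0"
      by (rule emeasure_UN_eq_0) (use calculation(2) in auto)
    ultimately show ?thesis by simp
  qed
  have "{-1<..b} = {-1<..<0} \<union> {0..b}" using b by auto
  moreover have "emeasure (stieltjes F) ({-1<..<0} \<union> {0..b}) = emeasure (stieltjes F) {-1<..<0} + emeasure (stieltjes F) {0..b}"
    by (rule plus_emeasure[symmetric]) auto
  ultimately have "emeasure (stieltjes F) {-1<..b} = emeasure (stieltjes F) {-1<..<0} + emeasure (stieltjes F) {0..b}"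
    by simp
  thus ?thesis using m1 null by simp
qed

lemma step_path_ext0:
  fixes s y :: "nat \<Rightarrow> real" and c0 :: real
  assumes fin: "\<And>t. finite {n. s n \<le> t}" and y0: "\<And>n. 0 \<le> y n" and s0: "\<And>n. 0 \<le> s n"
    and c0: "0 \<le> c0" and F: "\<And>t. 0 \<le> t \<Longrightarrow> F t = c0 + (\<Sum>n\<in>{n. s n \<le> t}. y n)"
  shows "ext0 F = (\<lambda>t. \<Sum>n\<in>{n. case_nat 0 s n \<le> t}. case_nat c0 y n)"
proof
  fix t
  show "ext0 F t = (\<Sum>n\<in>{n. case_nat 0 s n \<le> t}. case_nat c0 y n)"
  proof (cases "t < 0")
    case True
    have "\<not> case_nat 0 s n \<le> t" for n using True s0[of "n - 1"] by (cases n) auto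
    hence "{n. case_nat 0 s n \<le> t} = {}" by auto
    thus ?thesis using True by (simp add: ext0_def)
  next
    case False
    have "{n. case_nat 0 s n \<le> t} = insert 0 (Suc ` {n. s n \<le> t})"
    proof safe
      fix n assume "case_nat 0 s n \<le> t" "n \<notin> Suc ` {n. s n \<le> t}"
      thus "n = 0" by (cases n) auto
    qed (use False in auto)
    hence "(\<Sum>n\<in>{n. case_nat 0 s n \<le> t}. case_nat c0 y n) = c0 + (\<Sum>n\<in>{n. s n \<le> t}. y n)"
      using fin by (simp add: sum.reindex)
    thus ?thesis using False F by (simp add: ext0_def)
  qed
qed

lemma step_fin': assumes fin: "\<And>t. finite {n. s n \<le> t}"
  shows "finite {n. case_nat (0::real) s n \<le> t}"
proof -
  have "{n. case_nat 0 s n \<le> t} \<subseteq> insert 0 (Suc ` {n. s n \<le> t})"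
  proof safe
    fix n assume "case_nat 0 s n \<le> t" "n \<notin> Suc ` {n. s n \<le> t}"
    thus "n = 0" by (cases n) auto
  qed
  thus ?thesis using fin[of t] by (meson finite_imageI finite_insert finite_subset)
qed

lemma step_integral:
  fixes s y :: "nat \<Rightarrow> real" and c0 :: real
  assumes fin: "\<And>t. finite {n. s n \<le> t}" and y0: "\<And>n. 0 \<le> y n" and s0: "\<And>n. 0 \<le> s n"
    and c0: "0 \<le> c0" and F: "\<And>t. 0 \<le> t \<Longrightarrow> F t = c0 + (\<Sum>n\<in>{n. s n \<le> t}. y n)"
    and f: "f \<in> borel_measurable borel"
  shows "(\<integral>\<^sup>+t. f t \<partial>stieltjes F) = ennreal c0 * f 0 + (\<Sum>n. ennreal (y n) * f (s n))"
proof -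
  have y0': "0 \<le> case_nat c0 y n" for n using y0 c0 by (cases n) auto
  have E: "ext0 F = (\<lambda>t. \<Sum>n\<in>{n. case_nat 0 s n \<le> t}. case_nat c0 y n)"
    by (rule step_path_ext0[OF assms(1-5)])
  have "stieltjes F = distr (density (count_space UNIV) (\<lambda>n. ennreal (case_nat c0 y n))) borel (case_nat 0 s)"
    unfolding stieltjes_ext0 E
    using step_measure[OF step_fin'[OF fin] y0'] .
  hence "(\<integral>\<^sup>+t. f t \<partial>stieltjes F) = (\<integral>\<^sup>+n. ennreal (case_nat c0 y n) * f (case_nat 0 s n) \<partial>count_space UNIV)"
    using f by (simp add: nn_integral_distr nn_integral_density)
  also have "\<dots> = (\<Sum>n. ennreal (case_nat c0 y n) * f (case_nat 0 s n))"
    by (rule nn_integral_count_space_nat)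
  also have "\<dots> = ennreal c0 * f 0 + (\<Sum>n. ennreal (y n) * f (s n))"
  proof -
    let ?g = "\<lambda>n. ennreal (case_nat c0 y n) * f (case_nat 0 s n)"
    have "suminf ?g = (\<Sum>n. ?g (n + 1)) + (\<Sum>i<1. ?g i)"
      by (rule suminf_offset) (rule summableI)
    thus ?thesis by (simp add: add.commute)
  qed
  finally show ?thesis .
qed

lemma step_path:
  fixes s y :: "nat \<Rightarrow> real" and c0 :: real
  assumes fin: "\<And>t. finite {n. s n \<le> t}" and y0: "\<And>n. 0 \<le> y n" and s0: "\<And>n. 0 \<le> s n"
    and c0: "0 \<le> c0" and F: "\<And>t. 0 \<le> t \<Longrightarrow> F t = c0 + (\<Sum>n\<in>{n. s n \<le> t}. y n)"
  shows "path F"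
proof -
  have E: "ext0 F = (\<lambda>t. \<Sum>n\<in>{n. case_nat 0 s n \<le> t}. case_nat c0 y n)"
    by (rule step_path_ext0[OF assms])
  have y0': "0 \<le> case_nat c0 y n" for n using y0 c0 by (cases n) auto
  have F0: "0 \<le> F 0" using F[of 0] y0 c0 by (simp add: sum_nonneg)
  have "mono_on {0..} F"
    unfolding mono_on_def
  proof safe
    fix a b :: real assume "0 \<le> a" "a \<le> b"
    thus "F a \<le> F b" using F step_mono[OF fin y0, of a b] by auto
  qed
  moreover have "continuous (at_right t) F" if t: "0 \<le> t" for t
  proof -
    have c: "continuous (at_right t) (ext0 F)" unfolding E by (rule step_rcont[OF step_fin'[OF fin]])
    have "eventually (\<lambda>u. ext0 F u = F u) (at_right t)"
      unfolding eventually_at_right_field using t by (intro exI[of _ "t+1"]) (auto simp: ext0_def)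
    moreover have "ext0 F t = F t" using t by (simp add: ext0_def)
    moreover have "(ext0 F \<longlongrightarrow> ext0 F t) (at_right t)" using c by (simp add: continuous_within)
    ultimately have "(F \<longlongrightarrow> F t) (at_right t)"
      using Lim_transform_eventually by metis
    thus ?thesis by (simp add: continuous_within)
  qed
  ultimately show ?thesis using F0 by (simp add: path_def)
qed

lemma layer_cake:
  fixes N :: "real measure" and g :: "real \<Rightarrow> real"
  assumes sf: "sigma_finite_measure N" and sN: "sets N = sets borel"
    and g: "g \<in> borel_measurable borel" and g0: "\<And>t. 0 \<le> g t"
  shows "(\<integral>\<^sup>+t. ennreal (g t) \<partial>N) = (\<integral>\<^sup>+r. indicator {0..} r * emeasure N {t. r < g t} \<partial>lborel)"
proof -
  interpret pair_sigma_finite N lborel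
    unfolding pair_sigma_finite_def using sf sigma_finite_lborel by auto
  have meas: "(\<lambda>(t, r). indicator {p::real\<times>real. 0 \<le> snd p \<and> snd p < g (fst p)} (t, r) :: ennreal)
      \<in> borel_measurable (N \<Otimes>\<^sub>M lborel)"
  proof -
    have "{p::real\<times>real. 0 \<le> snd p \<and> snd p < g (fst p)} \<in> sets (N \<Otimes>\<^sub>M lborel)"
    proof -
      have gN: "g \<in> borel_measurable N" by (subst measurable_cong_sets[OF sN refl]) (rule g)
      have h1: "(\<lambda>p. g (fst p)) \<in> borel_measurable (N \<Otimes>\<^sub>M lborel)"
        by (rule measurable_compose[OF measurable_fst gN])
      have h2: "(\<lambda>p::real\<times>real. snd p) \<in> borel_measurable (N \<Otimes>\<^sub>M lborel)"
        by (rule measurable_compose[OF measurable_snd]) simp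
      have h3: "(\<lambda>p::real\<times>real. 0::real) \<in> borel_measurable (N \<Otimes>\<^sub>M lborel)" by simp
      have "{w \<in> space (N \<Otimes>\<^sub>M lborel). snd w < g (fst w)} \<in> sets (N \<Otimes>\<^sub>M lborel)"
        by (rule borel_measurable_less[OF h2 h1])
      moreover have "{w \<in> space (N \<Otimes>\<^sub>M lborel). (0::real) \<le> snd w} \<in> sets (N \<Otimes>\<^sub>M lborel)"
        by (rule borel_measurable_le[OF h3 h2])
      ultimately have "{w \<in> space (N \<Otimes>\<^sub>M lborel). snd w < g (fst w)} \<inter> {w \<in> space (N \<Otimes>\<^sub>M lborel). (0::real) \<le> snd w} \<in> sets (N \<Otimes>\<^sub>M lborel)"
        by (rule sets.Int)
      moreover have sp: "space (N \<Otimes>\<^sub>M lborel) = UNIV"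
        by (simp add: space_pair_measure sets_eq_imp_space_eq[OF sN])
      moreover have "{p::real\<times>real. 0 \<le> snd p \<and> snd p < g (fst p)} = {w \<in> space (N \<Otimes>\<^sub>M lborel). snd w < g (fst w)} \<inter> {w \<in> space (N \<Otimes>\<^sub>M lborel). (0::real) \<le> snd w}"
        using sp by auto
      ultimately show ?thesis by (simp only:)
    qed
    thus ?thesis by (simp add: case_prod_beta')
  qed
  have "(\<integral>\<^sup>+t. ennreal (g t) \<partial>N)
      = (\<integral>\<^sup>+t. (\<integral>\<^sup>+r. indicator {p::real\<times>real. 0 \<le> snd p \<and> snd p < g (fst p)} (t, r) \<partial>lborel) \<partial>N)"
  proof (rule nn_integral_cong)
    fix t
    have "(\<integral>\<^sup>+r. indicator {p::real\<times>real. 0 \<le> snd p \<and> snd p < g (fst p)} (t, r) \<partial>lborel)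
        = (\<integral>\<^sup>+r. indicator {0..<g t} r \<partial>lborel)"
      by (rule nn_integral_cong) (auto simp: indicator_def)
    also have "\<dots> = ennreal (g t)" using g0[of t] by simp
    finally show "ennreal (g t) = (\<integral>\<^sup>+r. indicator {p::real\<times>real. 0 \<le> snd p \<and> snd p < g (fst p)} (t, r) \<partial>lborel)" by simp
  qed
  also have "\<dots> = (\<integral>\<^sup>+r. (\<integral>\<^sup>+t. indicator {p::real\<times>real. 0 \<le> snd p \<and> snd p < g (fst p)} (t, r) \<partial>N) \<partial>lborel)"
    by (rule Fubini'[symmetric]) (use meas in simp)
  also have "\<dots> = (\<integral>\<^sup>+r. indicator {0..} r * emeasure N {t. r < g t} \<partial>lborel)"
  proof (rule nn_integral_cong)
    fix r :: real
    have "g -` {r<..} \<inter> space borel \<in> sets borel" by (rule measurable_sets[OF g]) simp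
    hence mt: "{t. r < g t} \<in> sets N" by (simp add: sN vimage_def)
    have "(\<integral>\<^sup>+t. indicator {p::real\<times>real. 0 \<le> snd p \<and> snd p < g (fst p)} (t, r) \<partial>N)
        = (\<integral>\<^sup>+t. indicator {0..} r * indicator {t. r < g t} t \<partial>N)"
      by (rule nn_integral_cong) (auto simp: indicator_def)
    also have "\<dots> = indicator {0..} r * emeasure N {t. r < g t}"
      using mt by (simp add: nn_integral_cmult_indicator)
    finally show "(\<integral>\<^sup>+t. indicator {p::real\<times>real. 0 \<le> snd p \<and> snd p < g (fst p)} (t, r) \<partial>N)
        = indicator {0..} r * emeasure N {t. r < g t}" .
  qed
  finally show ?thesis .
qed

lemma ereal_minus_pos_less: assumes "ereal t \<le> c - ereal e" "0 < e" shows "ereal t < c"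
  using assms by (cases c) auto

lemma inv_Suc_anti: "m \<le> n \<Longrightarrow> 1 / real (Suc n) \<le> 1 / real (Suc m)"
  by (simp add: frac_le)

lemma seg_union:
  fixes H c :: ereal
  shows "{t. 0 \<le> t \<and> ereal t \<le> H \<and> ereal t < c} =
    (\<Union>n. {t. 0 \<le> t \<and> ereal t \<le> min H (min (ereal (real n)) (c - ereal (1 / Suc n)))})"
proof safe
  fix t assume t: "0 \<le> t" "ereal t \<le> H" "ereal t < c"
  obtain n where n: "ereal t \<le> ereal (real n)" "ereal t \<le> c - ereal (1 / Suc n)"
  proof (cases c)
    case (real r)
    then have "0 < r - t" using t by auto
    then obtain n1 where n1: "inverse (real (Suc n1)) < r - t" using reals_Archimedean by blast
    obtain n2 :: nat where n2: "t \<le> n2" using real_arch_simple by blast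
    define n where "n = max n1 n2"
    have "1 / real (Suc n) \<le> 1 / real (Suc n1)" by (rule inv_Suc_anti) (simp add: n_def)
    hence "t \<le> r - 1 / real (Suc n)" using n1 by (simp add: inverse_eq_divide)
    moreover have "t \<le> real n" using n2 by (simp add: n_def)
    ultimately show ?thesis using that[of n] real by simp
  next
    case PInf
    obtain n2 :: nat where n2: "t \<le> n2" using real_arch_simple by blast
    thus ?thesis using that[of n2] PInf by simp
  next
    case MInf thus ?thesis using t by simp
  qed
  thus "t \<in> (\<Union>n. {t. 0 \<le> t \<and> ereal t \<le> min H (min (ereal (real n)) (c - ereal (1 / Suc n)))})"
    using t by auto
next
  fix t n assume "0 \<le> t" "ereal t \<le> min H (min (ereal (real n)) (c - ereal (1 / Suc n)))"
  thus "ereal t \<le> H" "ereal t < c" using ereal_minus_pos_less[of t c "1 / Suc n"] by auto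
qed

lemma seg_compare:
  fixes H c c' :: ereal
  assumes PF: "path F" and PK: "path K"
    and le: "\<And>t. 0 \<le> t \<Longrightarrow> ereal t \<le> H \<Longrightarrow> ereal t < c \<Longrightarrow> F t \<le> K t"
    and c': "c' \<le> c"
  shows "emeasure (stieltjes F) {t. 0 \<le> t \<and> ereal t \<le> H \<and> ereal t < c'}
      \<le> emeasure (stieltjes K) {t. 0 \<le> t \<and> ereal t \<le> H \<and> ereal t < c'}"
proof -
  define m where "m n = min H (min (ereal (real n)) (c' - ereal (1 / Suc n)))" for n :: nat
  define C where "C n = {t. 0 \<le> t \<and> ereal t \<le> m n}" for n
  have U: "{t. 0 \<le> t \<and> ereal t \<le> H \<and> ereal t < c'} = (\<Union>n. C n)"
    unfolding C_def m_def by (rule seg_union)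
  have Cb: "C n \<in> sets borel" for n
  proof -
    have "{t. ereal t \<le> m n} \<in> sets borel"
      using borel_measurable_le[of "\<lambda>t. ereal t" borel "\<lambda>_. m n"] by simp
    moreover have "C n = {0..} \<inter> {t. ereal t \<le> m n}" unfolding C_def by auto
    ultimately show ?thesis by simp
  qed
  have mono_m: "m n \<le> m (Suc n)" for n
  proof -
    have "c' - ereal (1 / Suc n) \<le> c' - ereal (1 / Suc (Suc n))"
      using inv_Suc_anti[of n "Suc n"] by (cases c') auto
    thus ?thesis unfolding m_def by (intro min.mono) auto
  qed
  have inc: "incseq C"
  proof (rule incseq_SucI, rule subsetI)
    fix n t assume "t \<in> C n"
    hence "0 \<le> t" "ereal t \<le> m n" unfolding C_def by auto
    moreover have "ereal t \<le> m (Suc n)" by (rule order_trans[OF \<open>ereal t \<le> m n\<close> mono_m])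
    ultimately show "t \<in> C (Suc n)" unfolding C_def by simp
  qed
  have each: "emeasure (stieltjes F) (C n) \<le> emeasure (stieltjes K) (C n)" for n
  proof (cases "m n < 0")
    case True
    have "t \<notin> C n" for t
    proof
      assume "t \<in> C n"
      hence "0 \<le> t" "ereal t \<le> m n" unfolding C_def by auto
      hence "ereal t < 0" using True by (meson order_le_less_trans)
      thus False using \<open>0 \<le> t\<close> by simp
    qed
    hence "C n = {}" by blast
    thus ?thesis by simp
  next
    case False
    have "m n \<le> ereal (real n)" unfolding m_def by (meson min.cobounded1 min.coboundedI2)
    with False obtain b where b: "m n = ereal b" "0 \<le> b"
      by (cases "m n") auto
    have Cn: "C n = {0..b}" unfolding C_def using b by auto
    have "ereal b \<le> H" using b(1)[symmetric] unfolding m_def by (metis min.cobounded1)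
    moreover have "m n \<le> c' - ereal (1 / Suc n)" unfolding m_def by (meson min.cobounded2 min.coboundedI2)
    hence "ereal b < c'" using b ereal_minus_pos_less[of b c' "1 / Suc n"] by simp
    ultimately have "F b \<le> K b" using le b c' by (meson order_less_le_trans)
    thus ?thesis unfolding Cn using stieltjes_Icc0[OF PF b(2)] stieltjes_Icc0[OF PK b(2)]
      by (simp add: ennreal_leI)
  qed
  have "emeasure (stieltjes F) (\<Union>n. C n) = (SUP n. emeasure (stieltjes F) (C n))"
    by (rule SUP_emeasure_incseq[symmetric]) (use Cb inc in auto)
  also have "\<dots> \<le> (SUP n. emeasure (stieltjes K) (C n))"
    by (rule SUP_mono) (use each in auto)
  also have "\<dots> = emeasure (stieltjes K) (\<Union>n. C n)"
    by (rule SUP_emeasure_incseq) (use Cb inc in auto)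
  finally show ?thesis unfolding U .
qed

lemma exp_less_iff_div:
  fixes r \<delta> t :: real
  assumes "0 < r" "0 < \<delta>"
  shows "(r < exp (-\<delta> * t)) = (t < - ln r / \<delta>)"
proof -
  have "(r < exp (-\<delta> * t)) = (ln r < -\<delta> * t)"
    using assms by (metis exp_less_cancel_iff exp_ln)
  also have "\<dots> = (\<delta> * t < - ln r)" by linarith
  also have "\<dots> = (t < - ln r / \<delta>)" using assms by (metis pos_less_divide_eq mult.commute)
  finally show ?thesis .
qed

lemma A_borel: "{t::real. 0 \<le> t \<and> ereal t \<le> H \<and> ereal t < c} \<in> sets borel"
proof -
  have "{t. ereal t \<le> H} \<in> sets borel"
    using borel_measurable_le[of "\<lambda>t. ereal t" borel "\<lambda>_. H"] by simp
  moreover have "{t. ereal t < c} \<in> sets borel"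
    using borel_measurable_less[of "\<lambda>t. ereal t" borel "\<lambda>_. c"] by simp
  moreover have "{t::real. 0 \<le> t \<and> ereal t \<le> H \<and> ereal t < c} = {0..} \<inter> {t. ereal t \<le> H} \<inter> {t. ereal t < c}"
    by auto
  ultimately show ?thesis by simp
qed

lemma integral_compare:
  fixes H c :: ereal and \<delta> :: real
  assumes PF: "path F" and PK: "path K"
    and le: "\<And>t. 0 \<le> t \<Longrightarrow> ereal t \<le> H \<Longrightarrow> ereal t < c \<Longrightarrow> F t \<le> K t"
    and \<delta>: "0 \<le> \<delta>"
  shows "(\<integral>\<^sup>+t. indicator {t. 0 \<le> t \<and> ereal t \<le> H \<and> ereal t < c} t * ennreal (exp (- \<delta> * t)) \<partial>stieltjes F)
      \<le> (\<integral>\<^sup>+t. indicator {t. 0 \<le> t \<and> ereal t \<le> H \<and> ereal t < c} t * ennreal (exp (- \<delta> * t)) \<partial>stieltjes K)"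
proof -
  define A where "A = {t. 0 \<le> t \<and> ereal t \<le> H \<and> ereal t < c}"
  define g where "g t = indicator A t * exp (- \<delta> * t)" for t :: real
  have Ab: "A \<in> sets borel" unfolding A_def by (rule A_borel)
  have gm: "g \<in> borel_measurable borel" unfolding g_def using Ab by measurable
  have g0: "0 \<le> g t" for t unfolding g_def by (auto simp: indicator_def)
  have eqi: "indicator A t * ennreal (exp (- \<delta> * t)) = ennreal (g t)" for t
    unfolding g_def by (auto simp: indicator_def)
  define c' where "c' r = min c (if \<delta> = 0 then (if r < 1 then \<infinity> else 0)
      else (if r = 0 then \<infinity> else ereal (- ln r / \<delta>)))" for r
  have set_eq: "{t. r < g t} = {t. 0 \<le> t \<and> ereal t \<le> H \<and> ereal t < c' r}" if r: "0 \<le> r" for r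
  proof (rule set_eqI)
    fix t
    show "t \<in> {t. r < g t} \<longleftrightarrow> t \<in> {t. 0 \<le> t \<and> ereal t \<le> H \<and> ereal t < c' r}"
    proof (cases "t \<in> A")
      case False
      hence "g t = 0" unfolding g_def by simp
      moreover have "\<not> (0 \<le> t \<and> ereal t \<le> H \<and> ereal t < c' r)" using False unfolding A_def c'_def by auto
      ultimately show ?thesis using r by auto
    next
      case True
      hence gt: "g t = exp (- \<delta> * t)" and tA: "0 \<le> t" "ereal t \<le> H" "ereal t < c"
        unfolding g_def A_def by auto
      have "(r < exp (- \<delta> * t)) = (ereal t < c' r)"
      proof (cases "\<delta> = 0")
        case True thus ?thesis using tA unfolding c'_def by auto
      next
        case False
        hence dp: "0 < \<delta>" using \<delta> by auto
        show ?thesis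
        proof (cases "r = 0")
          case True thus ?thesis using tA False unfolding c'_def by auto
        next
          case False
          hence "0 < r" using r by auto
          thus ?thesis using tA \<open>\<delta> \<noteq> 0\<close> exp_less_iff_div[OF \<open>0 < r\<close> dp, of t] unfolding c'_def by auto
        qed
      qed
      thus ?thesis using gt tA by auto
    qed
  qed
  have c'le: "c' r \<le> c" for r unfolding c'_def by auto
  have "(\<integral>\<^sup>+t. indicator A t * ennreal (exp (- \<delta> * t)) \<partial>stieltjes F) = (\<integral>\<^sup>+t. ennreal (g t) \<partial>stieltjes F)"
    by (rule nn_integral_cong) (rule eqi)
  also have "\<dots> = (\<integral>\<^sup>+r. indicator {0..} r * emeasure (stieltjes F) {t. r < g t} \<partial>lborel)"
    by (rule layer_cake[OF stieltjes_sigma_finite[OF PF] _ gm g0]) simp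
  also have "\<dots> \<le> (\<integral>\<^sup>+r. indicator {0..} r * emeasure (stieltjes K) {t. r < g t} \<partial>lborel)"
  proof (rule nn_integral_mono)
    fix r :: real
    show "indicator {0..} r * emeasure (stieltjes F) {t. r < g t} \<le> indicator {0..} r * emeasure (stieltjes K) {t. r < g t}"
    proof (cases "0 \<le> r")
      case True
      thus ?thesis using seg_compare[OF PF PK le c'le[of r]] set_eq[OF True]
        by (simp add: mult_left_mono)
    qed simp
  qed
  also have "\<dots> = (\<integral>\<^sup>+t. ennreal (g t) \<partial>stieltjes K)"
    by (rule layer_cake[symmetric, OF stieltjes_sigma_finite[OF PK] _ gm g0]) simp
  also have "\<dots> = (\<integral>\<^sup>+t. indicator A t * ennreal (exp (- \<delta> * t)) \<partial>stieltjes K)"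
    by (rule nn_integral_cong) (rule eqi[symmetric])
  finally show ?thesis unfolding A_def .
qed

definition good :: "(nat \<Rightarrow> 'a \<Rightarrow> real) \<Rightarrow> (nat \<Rightarrow> 'a \<Rightarrow> real) \<Rightarrow> 'a \<Rightarrow> bool" where
  "good W Y \<omega> \<longleftrightarrow> (\<forall>i. 0 < W i \<omega>) \<and> (\<forall>i. 0 < Y i \<omega>) \<and> (\<forall>t. finite {n. arrival W n \<omega> \<le> t})"

lemma good_arrival_pos: "good W Y \<omega> \<Longrightarrow> 0 < arrival W n \<omega>"
  unfolding good_def arrival_def
  by (intro sum_pos) auto

lemma good_arrival_mono: assumes "good W Y \<omega>" "m \<le> n" shows "arrival W m \<omega> \<le> arrival W n \<omega>"
  unfolding arrival_def
  by (rule sum_mono2) (use assms in \<open>auto simp: good_def less_imp_le\<close>)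

lemma good_fin: "good W Y \<omega> \<Longrightarrow> finite {n. arrival W n \<omega> \<le> t}"
  by (simp add: good_def)

lemma cpp_mono: assumes "good W Y \<omega>" "t \<le> u" shows "cpp W Y \<omega> t \<le> cpp W Y \<omega> u"
  unfolding cpp_def
  by (rule sum_mono2) (use assms in \<open>auto simp: good_def less_imp_le\<close>)

lemma cpp_nonneg: assumes "good W Y \<omega>" shows "0 \<le> cpp W Y \<omega> t"
  unfolding cpp_def
  by (rule sum_nonneg) (use assms in \<open>auto simp: good_def less_imp_le\<close>)

lemma cpp_zero: assumes "good W Y \<omega>" "t < arrival W 0 \<omega>" shows "cpp W Y \<omega> t = 0"
proof -
  have "\<not> arrival W n \<omega> \<le> t" for n
    using good_arrival_mono[OF assms(1), of 0 n] assms(2) by linarith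
  hence "{n. arrival W n \<omega> \<le> t} = {}" by blast
  thus ?thesis by (simp add: cpp_def)
qed

definition fH :: "ereal \<Rightarrow> real \<Rightarrow> real \<Rightarrow> ennreal" where
  "fH H \<delta> t = indicator {t. 0 \<le> t \<and> ereal t \<le> H} t * ennreal (exp (- \<delta> * t))"

lemma fH_meas: "fH H \<delta> \<in> borel_measurable borel"
proof -
  have "{t::real. 0 \<le> t \<and> ereal t \<le> H} \<in> sets borel"
  proof -
    have "{t. ereal t \<le> H} \<in> sets borel"
      using borel_measurable_le[of "\<lambda>t. ereal t" borel "\<lambda>_. H"] by simp
    moreover have "{t::real. 0 \<le> t \<and> ereal t \<le> H} = {0..} \<inter> {t. ereal t \<le> H}" by auto
    ultimately show ?thesis by simp
  qed
  thus ?thesis unfolding fH_def by measurable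
qed

lemma fH0: assumes "0 \<le> H" shows "fH H \<delta> 0 = 1"
proof -
  have "ereal 0 \<le> H" using assms by (simp add: zero_ereal_def)
  thus ?thesis by (simp add: fH_def indicator_def)
qed

definition Vpath :: "(nat \<Rightarrow> 'a \<Rightarrow> real) \<Rightarrow> (nat \<Rightarrow> 'a \<Rightarrow> real) \<Rightarrow> ereal \<Rightarrow> real \<Rightarrow> 'a \<Rightarrow> ennreal" where
  "Vpath W Y H \<delta> \<omega> = (\<Sum>n. ennreal (Y n \<omega>) * fH H \<delta> (arrival W n \<omega>))"

lemma K_path_int:
  assumes g: "good W Y \<omega>" and c0: "0 \<le> c0"
  shows "path (\<lambda>t. c0 + cpp W Y \<omega> t) \<and>
    (\<forall>f \<in> borel_measurable borel. (\<integral>\<^sup>+t. f t \<partial>stieltjes (\<lambda>t. c0 + cpp W Y \<omega> t)) = ennreal c0 * f 0 + (\<Sum>n. ennreal (Y n \<omega>) * f (arrival W n \<omega>)))"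
proof -
  have fin: "\<And>t. finite {n. arrival W n \<omega> \<le> t}" using g by (simp add: good_def)
  have y0: "\<And>n. 0 \<le> Y n \<omega>" using g by (simp add: good_def less_imp_le)
  have s0: "\<And>n. 0 \<le> arrival W n \<omega>" using good_arrival_pos[OF g] less_imp_le by blast
  have F: "\<And>t. 0 \<le> t \<Longrightarrow> c0 + cpp W Y \<omega> t = c0 + (\<Sum>n\<in>{n. arrival W n \<omega> \<le> t}. Y n \<omega>)"
    by (simp add: cpp_def)
  show ?thesis using step_path[OF fin y0 s0 c0 F] step_integral[OF fin y0 s0 c0 F] by blast
qed

lemma upper_path:
  fixes D :: "'a \<Rightarrow> real \<Rightarrow> real"
  assumes g: "good W Y \<omega>" and P: "path (D \<omega>)" and x: "0 < x" and \<delta>: "0 \<le> \<delta>" and H: "0 \<le> H"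
  shows "(\<integral>\<^sup>+t. indicator {t. 0 \<le> t \<and> ereal t \<le> H \<and> ereal t < ruin_time x (cpp W Y) D \<omega>} t
            * ennreal (exp (- \<delta> * t)) \<partial>stieltjes (D \<omega>))
       \<le> ennreal x + Vpath W Y H \<delta> \<omega>"
proof -
  let ?J = "cpp W Y \<omega>"
  let ?K = "\<lambda>t. x + ?J t"
  let ?c = "ruin_time x (cpp W Y) D \<omega>"
  have PK: "path ?K" using K_path_int[OF g] x by simp
  have le: "D \<omega> t \<le> ?K t" if t: "0 \<le> t" "ereal t \<le> H" "ereal t < ?c" for t
  proof (cases "t = 0")
    case False
    hence tp: "0 < t" using t by simp
    have "\<not> surplus x (cpp W Y) D \<omega> t \<le> 0"
    proof
      assume "surplus x (cpp W Y) D \<omega> t \<le> 0"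
      hence "?c \<le> ereal t" unfolding ruin_time_def using tp by (intro Inf_lower) auto
      thus False using t(3) by simp
    qed
    thus ?thesis by (simp add: surplus_def)
  next
    case True
    hence c0: "0 < ?c" using t by (simp add: zero_ereal_def)
    obtain z where z: "0 < ereal z" "ereal z < ?c" using ereal_dense2[OF c0] by auto
    define t' where "t' = min z (arrival W 0 \<omega> / 2)"
    have a0: "0 < arrival W 0 \<omega>" by (rule good_arrival_pos[OF g])
    have t'p: "0 < t'" using z a0 by (simp add: t'_def)
    have t'c: "ereal t' < ?c" using z by (smt (verit, best) ereal_less_eq(3) order_le_less_trans t'_def)
    have "\<not> surplus x (cpp W Y) D \<omega> t' \<le> 0"
    proof
      assume "surplus x (cpp W Y) D \<omega> t' \<le> 0"
      hence "?c \<le> ereal t'" unfolding ruin_time_def using t'p by (intro Inf_lower) auto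
      thus False using t'c by simp
    qed
    moreover have "?J t' = 0" using a0 by (intro cpp_zero[OF g]) (simp add: t'_def)
    moreover have "D \<omega> 0 \<le> D \<omega> t'" using P t'p unfolding path_def mono_on_def by auto
    moreover have "?J 0 = 0" using a0 by (intro cpp_zero[OF g]) simp
    ultimately show ?thesis using True by (simp add: surplus_def)
  qed
  have "(\<integral>\<^sup>+t. indicator {t. 0 \<le> t \<and> ereal t \<le> H \<and> ereal t < ?c} t * ennreal (exp (- \<delta> * t)) \<partial>stieltjes (D \<omega>))
      \<le> (\<integral>\<^sup>+t. indicator {t. 0 \<le> t \<and> ereal t \<le> H \<and> ereal t < ?c} t * ennreal (exp (- \<delta> * t)) \<partial>stieltjes ?K)"
    by (rule integral_compare[OF P PK le \<delta>])
  also have "\<dots> \<le> (\<integral>\<^sup>+t. fH H \<delta> t \<partial>stieltjes ?K)"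
    unfolding fH_def by (intro nn_integral_mono mult_right_mono) (auto simp: indicator_def)
  also have "\<dots> = ennreal x * fH H \<delta> 0 + (\<Sum>n. ennreal (Y n \<omega>) * fH H \<delta> (arrival W n \<omega>))"
    using K_path_int[OF g, of x] fH_meas x by simp
  also have "\<dots> = ennreal x + Vpath W Y H \<delta> \<omega>"
    using H by (simp add: fH0 Vpath_def)
  finally show ?thesis .
qed

lemma eps_ruin: "0 < \<epsilon> \<Longrightarrow> ruin_time x J (eps_strategy x \<epsilon> J) \<omega> = \<infinity>"
  unfolding ruin_time_def surplus_def eps_strategy_def by (simp add: top_ereal_def)

lemma eps_value_path:
  assumes g: "good W Y \<omega>" and e: "0 < \<epsilon>" "\<epsilon> < x" and H: "0 \<le> H"
  shows "(\<integral>\<^sup>+t. indicator {t. 0 \<le> t \<and> ereal t \<le> H \<and> ereal t < ruin_time x (cpp W Y) (eps_strategy x \<epsilon> (cpp W Y)) \<omega>} t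
            * ennreal (exp (- \<delta> * t)) \<partial>stieltjes (eps_strategy x \<epsilon> (cpp W Y) \<omega>))
       = ennreal (x - \<epsilon>) + Vpath W Y H \<delta> \<omega>"
proof -
  have E: "eps_strategy x \<epsilon> (cpp W Y) \<omega> = (\<lambda>t. (x - \<epsilon>) + cpp W Y \<omega> t)"
    by (simp add: eps_strategy_def fun_eq_iff)
  have "(\<integral>\<^sup>+t. indicator {t. 0 \<le> t \<and> ereal t \<le> H \<and> ereal t < ruin_time x (cpp W Y) (eps_strategy x \<epsilon> (cpp W Y)) \<omega>} t
            * ennreal (exp (- \<delta> * t)) \<partial>stieltjes (eps_strategy x \<epsilon> (cpp W Y) \<omega>))
      = (\<integral>\<^sup>+t. fH H \<delta> t \<partial>stieltjes (\<lambda>t. (x - \<epsilon>) + cpp W Y \<omega> t))"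
    unfolding eps_ruin[OF e(1)] E fH_def by simp
  also have "\<dots> = ennreal (x - \<epsilon>) * fH H \<delta> 0 + (\<Sum>n. ennreal (Y n \<omega>) * fH H \<delta> (arrival W n \<omega>))"
    using K_path_int[OF g, of "x - \<epsilon>"] fH_meas e by simp
  finally show ?thesis using H by (simp add: fH0 Vpath_def)
qed

definition grid_strategy :: "real \<Rightarrow> real \<Rightarrow> real \<Rightarrow> ('a \<Rightarrow> real \<Rightarrow> real) \<Rightarrow> 'a \<Rightarrow> real \<Rightarrow> real" where
  "grid_strategy x \<epsilon> h J \<omega> t = x - \<epsilon> + Max ((\<lambda>k. max 0 (J \<omega> (real k * h))) ` {..nat \<lfloor>t / h\<rfloor>})"

lemma natfilt_meas:
  assumes "0 \<le> s" "s \<le> t"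
  shows "(\<lambda>\<omega>. J \<omega> s) \<in> borel_measurable (natfilt M J t)"
proof -
  let ?G = "{(\<lambda>\<omega>. J \<omega> s) -` B \<inter> space M | s B. s \<in> {0..t} \<and> B \<in> sets borel}"
  have G: "?G \<subseteq> Pow (space M)" by auto
  show ?thesis
  proof (rule measurableI)
    fix \<omega> show "J \<omega> s \<in> space borel" by simp
  next
    fix B :: "real set" assume B: "B \<in> sets borel"
    have "space (natfilt M J t) = space M" unfolding natfilt_def using G by simp
    moreover have "sets (natfilt M J t) = sigma_sets (space M) ?G" unfolding natfilt_def using G by simp
    moreover have "(\<lambda>\<omega>. J \<omega> s) -` B \<inter> space M \<in> ?G" using assms B by auto
    ultimately show "(\<lambda>\<omega>. J \<omega> s) -` B \<inter> space (natfilt M J t) \<in> sets (natfilt M J t)" by auto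
  qed
qed

lemma floor_div_nat_le:
  assumes h: "0 < h" and k: "k \<le> nat \<lfloor>t / h\<rfloor>" and t: "0 \<le> t"
  shows "real k * h \<le> t"
proof -
  have "real k \<le> \<lfloor>t / h\<rfloor>" using k t h by (simp add: le_nat_iff)
  also have "\<dots> \<le> t / h" by simp
  finally show ?thesis using h by (simp add: pos_le_divide_eq)
qed

lemma grid_admissible:
  assumes h: "0 < h" and e: "\<epsilon> < x"
  shows "admissible M J (grid_strategy x \<epsilon> h J)"
  unfolding admissible_def
proof (intro conjI allI impI ballI)
  fix t :: real assume t: "0 \<le> t"
  have m: "(\<lambda>\<omega>. max 0 (J \<omega> (real k * h))) \<in> borel_measurable (natfilt M J t)" if "k \<in> {..nat \<lfloor>t / h\<rfloor>}" for k
  proof -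
    have "(\<lambda>\<omega>. J \<omega> (real k * h)) \<in> borel_measurable (natfilt M J t)"
      by (rule natfilt_meas) (use floor_div_nat_le[OF h _ t, of k] that h in auto)
    thus ?thesis by measurable
  qed
  have "(\<lambda>\<omega>. Max ((\<lambda>k. max 0 (J \<omega> (real k * h))) ` {..nat \<lfloor>t / h\<rfloor>})) \<in> borel_measurable (natfilt M J t)"
    by (rule borel_measurable_Max) (use m in auto)
  thus "(\<lambda>\<omega>. grid_strategy x \<epsilon> h J \<omega> t) \<in> borel_measurable (natfilt M J t)"
    unfolding grid_strategy_def by measurable
next
  fix \<omega>
  let ?g = "\<lambda>k. max 0 (J \<omega> (real k * h))"
  have D: "grid_strategy x \<epsilon> h J \<omega> t = x - \<epsilon> + Max (?g ` {..nat \<lfloor>t / h\<rfloor>})" for t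
    by (simp add: grid_strategy_def)
  show "0 \<le> grid_strategy x \<epsilon> h J \<omega> 0"
    using e by (simp add: D)
  show "mono_on {0..} (grid_strategy x \<epsilon> h J \<omega>)"
    unfolding mono_on_def
  proof safe
    fix a b :: real assume "0 \<le> a" "a \<le> b"
    hence "\<lfloor>a / h\<rfloor> \<le> \<lfloor>b / h\<rfloor>" using h by (intro floor_mono divide_right_mono) auto
    hence "{..nat \<lfloor>a / h\<rfloor>} \<subseteq> {..nat \<lfloor>b / h\<rfloor>}" by auto
    hence "Max (?g ` {..nat \<lfloor>a / h\<rfloor>}) \<le> Max (?g ` {..nat \<lfloor>b / h\<rfloor>})"
      by (intro Max_mono image_mono) auto
    thus "grid_strategy x \<epsilon> h J \<omega> a \<le> grid_strategy x \<epsilon> h J \<omega> b" by (simp add: D)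
  qed
  show "continuous (at_right t) (grid_strategy x \<epsilon> h J \<omega>)" if t: "0 \<le> t" for t
  proof -
    have "eventually (\<lambda>u. grid_strategy x \<epsilon> h J \<omega> u = grid_strategy x \<epsilon> h J \<omega> t) (at_right t)"
      unfolding eventually_at_right_field
    proof (intro exI[of _ "(\<lfloor>t / h\<rfloor> + 1) * h"] conjI allI impI)
      have "t / h < \<lfloor>t / h\<rfloor> + 1" by linarith
      thus "t < (\<lfloor>t / h\<rfloor> + 1) * h" using pos_divide_less_eq[OF h] by metis
      fix u assume u1: "t < u" and u2: "u < (\<lfloor>t / h\<rfloor> + 1) * h"
      note u = conjI[OF u1 u2]
      have "\<lfloor>u / h\<rfloor> = \<lfloor>t / h\<rfloor>"
      proof (rule floor_unique)
        have "t / h \<le> u / h" using u h by (intro divide_right_mono) auto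
        thus "real_of_int \<lfloor>t / h\<rfloor> \<le> u / h" by (meson of_int_floor_le order_trans)
        show "u / h < real_of_int \<lfloor>t / h\<rfloor> + 1" using u h by (simp add: pos_divide_less_eq)
      qed
      thus "grid_strategy x \<epsilon> h J \<omega> u = grid_strategy x \<epsilon> h J \<omega> t" by (simp add: D)
    qed
    thus ?thesis unfolding continuous_within by (rule tendsto_eventually)
  qed
  show "\<exists>l. (grid_strategy x \<epsilon> h J \<omega> \<longlongrightarrow> l) (at_left t)" if t: "0 < t" for t
  proof -
    define k where "k = \<lceil>t / h\<rceil> - 1"
    have kt: "k * h < t"
    proof -
      have "k < t / h" unfolding k_def by linarith
      thus ?thesis using h by (simp add: pos_less_divide_eq)
    qed
    have "eventually (\<lambda>u. grid_strategy x \<epsilon> h J \<omega> u = x - \<epsilon> + Max (?g ` {..nat k})) (at_left t)"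
      unfolding eventually_at_left_field
    proof (intro exI[of _ "k * h"] conjI allI impI)
      show "k * h < t" by (rule kt)
      fix u assume u1: "k * h < u" and u2: "u < t"
      note u = conjI[OF u1 u2]
      have "\<lfloor>u / h\<rfloor> = k"
      proof (rule floor_unique)
        show "real_of_int k \<le> u / h" using u h by (simp add: pos_le_divide_eq)
        have "u / h < t / h" using u h by (intro divide_strict_right_mono) auto
        also have "t / h \<le> real_of_int k + 1" unfolding k_def by linarith
        finally show "u / h < real_of_int k + 1" .
      qed
      thus "grid_strategy x \<epsilon> h J \<omega> u = x - \<epsilon> + Max (?g ` {..nat k})" by (simp add: D)
    qed
    hence "(grid_strategy x \<epsilon> h J \<omega> \<longlongrightarrow> x - \<epsilon> + Max (?g ` {..nat k})) (at_left t)"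
      by (rule tendsto_eventually)
    thus ?thesis by blast
  qed
qed

definition nxt :: "real \<Rightarrow> real \<Rightarrow> real" where
  "nxt h s = real (nat \<lceil>s / h\<rceil>) * h"

lemma nxt_props:
  assumes h: "0 < h" and s: "0 < s"
  shows "s \<le> nxt h s" "nxt h s \<le> s + h" "0 \<le> nxt h s"
    and "\<And>t. 0 \<le> t \<Longrightarrow> (s \<le> real (nat \<lfloor>t / h\<rfloor>) * h) = (nxt h s \<le> t)"
    and "\<And>N::nat. s \<le> real N * h \<Longrightarrow> nxt h s \<le> real N * h"
proof -
  have cpos: "0 < \<lceil>s / h\<rceil>" using h s by simp
  have nx: "nxt h s = \<lceil>s / h\<rceil> * h" unfolding nxt_def using cpos by simp
  have "s / h \<le> \<lceil>s / h\<rceil>" by simp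
  thus "s \<le> nxt h s" unfolding nx using pos_divide_le_eq[OF h] by metis
  have "\<lceil>s / h\<rceil> < s / h + 1" by linarith
  hence "\<lceil>s / h\<rceil> * h < (s / h + 1) * h" using h by (intro mult_strict_right_mono) auto
  thus "nxt h s \<le> s + h" unfolding nx using h by (simp add: distrib_right)
  show "0 \<le> nxt h s" unfolding nxt_def using h by simp
  fix t :: real assume t: "0 \<le> t"
  have fl: "real (nat \<lfloor>t / h\<rfloor>) = \<lfloor>t / h\<rfloor>" using t h by simp
  have "(s \<le> real (nat \<lfloor>t / h\<rfloor>) * h) = (s / h \<le> \<lfloor>t / h\<rfloor>)" unfolding fl using h by (simp add: pos_divide_le_eq)
  also have "\<dots> = (\<lceil>s / h\<rceil> \<le> \<lfloor>t / h\<rfloor>)" by (simp add: ceiling_le_iff)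
  also have "\<dots> = (\<lceil>s / h\<rceil> \<le> t / h)" by (simp add: le_floor_iff)
  also have "\<dots> = (nxt h s \<le> t)" unfolding nx using h by (simp add: pos_le_divide_eq)
  finally show "(s \<le> real (nat \<lfloor>t / h\<rfloor>) * h) = (nxt h s \<le> t)" .
next
  fix N :: nat assume "s \<le> real N * h"
  hence "s / h \<le> real N" using h by (simp add: pos_divide_le_eq)
  hence "\<lceil>s / h\<rceil> \<le> int N" by (simp add: ceiling_le_iff)
  hence "real_of_int \<lceil>s / h\<rceil> * h \<le> real N * h" using h by (intro mult_right_mono) auto
  thus "nxt h s \<le> real N * h"
    using h s by (simp add: nxt_def)
qed

lemma grid_eq:
  assumes g: "good W Y \<omega>" and h: "0 < h" and t: "0 \<le> t"
  shows "grid_strategy x \<epsilon> h (cpp W Y) \<omega> t = (x - \<epsilon>) + (\<Sum>n\<in>{n. nxt h (arrival W n \<omega>) \<le> t}. Y n \<omega>)"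
    and "cpp W Y \<omega> (real (nat \<lfloor>t / h\<rfloor>) * h) \<le> cpp W Y \<omega> t"
    and "grid_strategy x \<epsilon> h (cpp W Y) \<omega> t = (x - \<epsilon>) + cpp W Y \<omega> (real (nat \<lfloor>t / h\<rfloor>) * h)"
proof -
  let ?J = "cpp W Y \<omega>"
  let ?N = "nat \<lfloor>t / h\<rfloor>"
  have Nle: "real ?N * h \<le> t" by (rule floor_div_nat_le[OF h _ t]) simp
  have M: "Max ((\<lambda>k. max 0 (?J (real k * h))) ` {..?N}) = ?J (real ?N * h)"
  proof (rule Max_eqI)
    show "finite ((\<lambda>k. max 0 (?J (real k * h))) ` {..?N})" by simp
    fix y assume "y \<in> (\<lambda>k. max 0 (?J (real k * h))) ` {..?N}"
    then obtain k where k: "k \<le> ?N" "y = max 0 (?J (real k * h))" by auto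
    have "real k * h \<le> real ?N * h" using k h by (intro mult_right_mono) auto
    thus "y \<le> ?J (real ?N * h)" using k cpp_mono[OF g] cpp_nonneg[OF g] by (simp add: max_def)
  next
    show "?J (real ?N * h) \<in> (\<lambda>k. max 0 (?J (real k * h))) ` {..?N}"
      using cpp_nonneg[OF g] by (intro image_eqI[of _ _ ?N]) (auto simp: max_def)
  qed
  show G: "grid_strategy x \<epsilon> h (cpp W Y) \<omega> t = (x - \<epsilon>) + ?J (real ?N * h)"
    unfolding grid_strategy_def M by simp
  have "{n. arrival W n \<omega> \<le> real ?N * h} = {n. nxt h (arrival W n \<omega>) \<le> t}"
    using nxt_props(4)[OF h good_arrival_pos[OF g] t] by auto
  thus "grid_strategy x \<epsilon> h (cpp W Y) \<omega> t = (x - \<epsilon>) + (\<Sum>n\<in>{n. nxt h (arrival W n \<omega>) \<le> t}. Y n \<omega>)"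
    unfolding G cpp_def by simp
  show "?J (real ?N * h) \<le> ?J t" by (rule cpp_mono[OF g Nle])
qed

lemma grid_ruin:
  assumes g: "good W Y \<omega>" and h: "0 < h" and e: "0 < \<epsilon>"
  shows "ruin_time x (cpp W Y) (grid_strategy x \<epsilon> h (cpp W Y)) \<omega> = \<infinity>"
proof -
  have "\<not> surplus x (cpp W Y) (grid_strategy x \<epsilon> h (cpp W Y)) \<omega> t \<le> 0" if "0 < t" for t
    using grid_eq(2)[OF g h, of t] grid_eq(3)[OF g h, where t=t and x=x and \<epsilon>=\<epsilon>] that e by (simp add: surplus_def)
  hence "{ereal t | t. 0 < t \<and> surplus x (cpp W Y) (grid_strategy x \<epsilon> h (cpp W Y)) \<omega> t \<le> 0} = {}" by blast
  thus ?thesis unfolding ruin_time_def by (simp only: Inf_empty top_ereal_def)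
qed

lemma grid_value_path:
  assumes g: "good W Y \<omega>" and h: "0 < h" and e: "0 < \<epsilon>" "\<epsilon> < x" and \<delta>: "0 \<le> \<delta>"
    and H: "H = \<infinity> \<or> (\<exists>N::nat. H = ereal (real N * h))"
  shows "ennreal (x - \<epsilon>) + ennreal (exp (- \<delta> * h)) * Vpath W Y H \<delta> \<omega>
      \<le> (\<integral>\<^sup>+t. indicator {t. 0 \<le> t \<and> ereal t \<le> H \<and> ereal t < ruin_time x (cpp W Y) (grid_strategy x \<epsilon> h (cpp W Y)) \<omega>} t
            * ennreal (exp (- \<delta> * t)) \<partial>stieltjes (grid_strategy x \<epsilon> h (cpp W Y) \<omega>))"
proof -
  let ?s = "\<lambda>n. nxt h (arrival W n \<omega>)"
  have apos: "\<And>n. 0 < arrival W n \<omega>" by (rule good_arrival_pos[OF g])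
  have fin: "\<And>t. finite {n. ?s n \<le> t}"
  proof -
    fix t
    have "{n. ?s n \<le> t} \<subseteq> {n. arrival W n \<omega> \<le> t}"
      using nxt_props(1)[OF h apos] by (auto intro: order_trans)
    thus "finite {n. ?s n \<le> t}" using good_fin[OF g] by (rule finite_subset)
  qed
  have y0: "\<And>n. 0 \<le> Y n \<omega>" using g by (simp add: good_def less_imp_le)
  have s0: "\<And>n. 0 \<le> ?s n" using nxt_props(3)[OF h apos] by blast
  have c0: "0 \<le> x - \<epsilon>" using e by simp
  have F: "\<And>t. 0 \<le> t \<Longrightarrow> grid_strategy x \<epsilon> h (cpp W Y) \<omega> t = (x - \<epsilon>) + (\<Sum>n\<in>{n. ?s n \<le> t}. Y n \<omega>)"
    using grid_eq(1)[OF g h] by blast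
  have H0: "0 \<le> H" using H h by (auto simp: zero_ereal_def)
  have "(\<integral>\<^sup>+t. indicator {t. 0 \<le> t \<and> ereal t \<le> H \<and> ereal t < ruin_time x (cpp W Y) (grid_strategy x \<epsilon> h (cpp W Y)) \<omega>} t
            * ennreal (exp (- \<delta> * t)) \<partial>stieltjes (grid_strategy x \<epsilon> h (cpp W Y) \<omega>))
      = (\<integral>\<^sup>+t. fH H \<delta> t \<partial>stieltjes (grid_strategy x \<epsilon> h (cpp W Y) \<omega>))"
    unfolding grid_ruin[OF g h e(1)] fH_def by simp
  also have "\<dots> = ennreal (x - \<epsilon>) * fH H \<delta> 0 + (\<Sum>n. ennreal (Y n \<omega>) * fH H \<delta> (?s n))"
    by (rule step_integral[OF fin y0 s0 c0 F fH_meas])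
  also have "\<dots> = ennreal (x - \<epsilon>) + (\<Sum>n. ennreal (Y n \<omega>) * fH H \<delta> (?s n))"
    using H0 by (simp add: fH0)
  finally have eq: "(\<integral>\<^sup>+t. indicator {t. 0 \<le> t \<and> ereal t \<le> H \<and> ereal t < ruin_time x (cpp W Y) (grid_strategy x \<epsilon> h (cpp W Y)) \<omega>} t
            * ennreal (exp (- \<delta> * t)) \<partial>stieltjes (grid_strategy x \<epsilon> h (cpp W Y) \<omega>))
      = ennreal (x - \<epsilon>) + (\<Sum>n. ennreal (Y n \<omega>) * fH H \<delta> (?s n))" .
  have each: "ennreal (exp (- \<delta> * h)) * fH H \<delta> (arrival W n \<omega>) \<le> fH H \<delta> (?s n)" for n
  proof (cases "ereal (arrival W n \<omega>) \<le> H")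
    case False thus ?thesis using apos[of n] by (simp add: fH_def)
  next
    case True
    let ?a = "arrival W n \<omega>"
    have sH: "ereal (?s n) \<le> H"
      using H
    proof
      assume "\<exists>N::nat. H = ereal (real N * h)"
      then obtain N :: nat where N: "H = ereal (real N * h)" by blast
      hence "?a \<le> real N * h" using True by simp
      thus "ereal (?s n) \<le> H" using nxt_props(5)[OF h apos[of n]] N by simp
    qed simp
    have "exp (- \<delta> * h) * exp (- \<delta> * ?a) = exp (- \<delta> * (?a + h))" by (simp add: exp_add[symmetric] algebra_simps)
    also have "\<dots> \<le> exp (- \<delta> * ?s n)" using nxt_props(2)[OF h apos[of n]] \<delta> by (simp add: mult_left_mono)
    finally have "exp (- \<delta> * h) * exp (- \<delta> * ?a) \<le> exp (- \<delta> * ?s n)" .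
    thus ?thesis using True sH apos[of n] s0[of n]
      by (simp add: fH_def ennreal_mult''[symmetric] ennreal_leI less_imp_le)
  qed
  have "ennreal (exp (- \<delta> * h)) * Vpath W Y H \<delta> \<omega> = (\<Sum>n. ennreal (exp (- \<delta> * h)) * (ennreal (Y n \<omega>) * fH H \<delta> (arrival W n \<omega>)))"
    unfolding Vpath_def by (rule ennreal_suminf_cmult[symmetric])
  also have "\<dots> \<le> (\<Sum>n. ennreal (Y n \<omega>) * fH H \<delta> (?s n))"
  proof (rule suminf_le)
    fix n show "ennreal (exp (- \<delta> * h)) * (ennreal (Y n \<omega>) * fH H \<delta> (arrival W n \<omega>)) \<le> ennreal (Y n \<omega>) * fH H \<delta> (?s n)"
      using each[of n] by (simp add: mult.left_commute mult_left_mono)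
  qed auto
  finally show ?thesis unfolding eq by (simp add: add_left_mono)
qed

locale dual_model = prob_space M for M :: "'a measure" +
  fixes W Y :: "nat \<Rightarrow> 'a \<Rightarrow> real" and p :: "real \<Rightarrow> real" and lam :: real
  assumes lam: "lam > 0"
    and indep: "indep_vars (\<lambda>_. borel) (\<lambda>k. case k of Inl i \<Rightarrow> W i | Inr i \<Rightarrow> Y i) UNIV"
    and Wd: "\<And>i. distributed M lborel (W i) (\<lambda>t. ennreal (exponential_density lam t))"
    and pm: "p \<in> borel_measurable borel" and p0: "\<And>y. 0 \<le> p y" and pneg: "\<And>y. y \<le> 0 \<Longrightarrow> p y = 0"
    and Yd: "\<And>i. distributed M lborel (Y i) (\<lambda>y. ennreal (p y))"
    and Yint: "integrable M (Y 0)"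
begin

lemma W_meas[measurable]: "W i \<in> borel_measurable M"
  using distributed_measurable[OF Wd[of i]] by simp

lemma Y_meas[measurable]: "Y i \<in> borel_measurable M"
  using distributed_measurable[OF Yd[of i]] by simp

lemma arrival_meas[measurable]: "(\<lambda>\<omega>. arrival W n \<omega>) \<in> borel_measurable M"
  unfolding arrival_def by measurable

lemma AE_W_pos: "AE \<omega> in M. 0 < W i \<omega>"
proof -
  have d: "distr M lborel (W i) = density lborel (\<lambda>t. ennreal (exponential_density lam t))"
    using Wd[of i] by (simp add: distributed_def)
  have dm: "(\<lambda>t. ennreal (exponential_density lam t)) \<in> borel_measurable lborel"
    using Wd[of i] by (simp add: distributed_def)
  have "AE t in lborel. 0 < ennreal (exponential_density lam t) \<longrightarrow> 0 < t"
    using AE_lborel_singleton[of 0]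
    by eventually_elim (auto simp: exponential_density_def)
  hence "AE t in distr M lborel (W i). 0 < t" unfolding d using dm by (simp add: AE_density)
  thus ?thesis by (rule AE_distrD[OF distributed_measurable[OF Wd[of i]]])
qed

lemma AE_Y_pos: "AE \<omega> in M. 0 < Y i \<omega>"
proof -
  have d: "distr M lborel (Y i) = density lborel (\<lambda>y. ennreal (p y))"
    using Yd[of i] by (simp add: distributed_def)
  have dm: "(\<lambda>y. ennreal (p y)) \<in> borel_measurable lborel"
    using Yd[of i] by (simp add: distributed_def)
  have "AE y in lborel. 0 < ennreal (p y) \<longrightarrow> 0 < y"
    by (rule AE_I2) (metis ennreal_eq_0_iff less_irrefl not_le pneg)
  hence "AE y in distr M lborel (Y i). 0 < y" unfolding d using dm by (simp add: AE_density)
  thus ?thesis by (rule AE_distrD[OF distributed_measurable[OF Yd[of i]]])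
qed

lemma exp_W: assumes a: "0 \<le> a"
  shows "(\<integral>\<^sup>+\<omega>. ennreal (exp (- a * W i \<omega>)) \<partial>M) = ennreal (lam / (lam + a))"
proof -
  have "(\<integral>\<^sup>+\<omega>. ennreal (exp (- a * W i \<omega>)) \<partial>M)
      = (\<integral>\<^sup>+t. ennreal (exponential_density lam t) * ennreal (exp (- a * t)) \<partial>lborel)"
    by (rule distributed_nn_integral[OF Wd[of i], symmetric]) simp
  also have "\<dots> = (\<integral>\<^sup>+t. ennreal (lam / (lam + a)) * ennreal (exponential_density (lam + a) t) \<partial>lborel)"
  proof (rule nn_integral_cong)
    fix t :: real
    have "exponential_density lam t * exp (- a * t) = lam / (lam + a) * exponential_density (lam + a) t"
      using lam a by (auto simp: exponential_density_def field_simps exp_add[symmetric])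
    thus "ennreal (exponential_density lam t) * ennreal (exp (- a * t)) = ennreal (lam / (lam + a)) * ennreal (exponential_density (lam + a) t)"
      using lam a by (simp add: ennreal_mult''[symmetric] ennreal_mult'[symmetric])
  qed
  also have "\<dots> = ennreal (lam / (lam + a)) * (\<integral>\<^sup>+t. ennreal (exponential_density (lam + a) t) \<partial>lborel)"
    by (rule nn_integral_cmult) simp
  also have "(\<integral>\<^sup>+t. ennreal (exponential_density (lam + a) t) \<partial>lborel) = 1"
  proof -
    interpret P: prob_space "density lborel (exponential_density (lam + a))"
      using lam a by (intro prob_space_exponential_density) simp
    have "emeasure (density lborel (exponential_density (lam + a))) UNIV = 1"
      using P.emeasure_space_1 by simp
    thus ?thesis by (simp add: emeasure_density)
  qed
  finally show ?thesis by simp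
qed

lemma exp_W': "0 \<le> a \<Longrightarrow> (\<integral>\<^sup>+\<omega>. ennreal (exp (- (a * W i \<omega>))) \<partial>M) = ennreal (lam / (lam + a))"
  using exp_W[of a i] by simp

lemma mY_nn: "(\<integral>\<^sup>+\<omega>. ennreal (Y i \<omega>) \<partial>M) = ennreal (integral\<^sup>L M (Y 0))"
proof -
  have "(\<integral>\<^sup>+\<omega>. ennreal (Y i \<omega>) \<partial>M) = (\<integral>\<^sup>+y. ennreal (p y) * ennreal y \<partial>lborel)"
    by (rule distributed_nn_integral[OF Yd[of i], symmetric]) simp
  also have "\<dots> = (\<integral>\<^sup>+\<omega>. ennreal (Y 0 \<omega>) \<partial>M)"
    by (rule distributed_nn_integral[OF Yd[of 0]]) simp
  also have "\<dots> = ennreal (integral\<^sup>L M (Y 0))"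
    by (rule nn_integral_eq_integral[OF Yint]) (use AE_Y_pos[of 0] in \<open>auto elim: AE_mp\<close>)
  finally show ?thesis .
qed

definition gfun :: "real \<Rightarrow> nat + nat \<Rightarrow> real \<Rightarrow> ennreal" where
  "gfun a k = (case k of Inl i \<Rightarrow> (\<lambda>v. ennreal (exp (- a * v))) | Inr i \<Rightarrow> (\<lambda>v. ennreal v))"

lemma indep_g: "indep_vars (\<lambda>_. borel) (\<lambda>k \<omega>. gfun a k ((case k of Inl i \<Rightarrow> W i | Inr i \<Rightarrow> Y i) \<omega>)) I"
proof -
  have "indep_vars (\<lambda>_. borel) (\<lambda>k \<omega>. gfun a k ((case k of Inl i \<Rightarrow> W i | Inr i \<Rightarrow> Y i) \<omega>)) UNIV"
    by (rule indep_vars_compose2[OF indep]) (auto simp: gfun_def split: sum.split)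
  thus ?thesis by (rule indep_vars_subset) simp
qed

lemma prod_Inl: "(\<Prod>k\<in>Inl ` {..n}. gfun a k ((case k of Inl i \<Rightarrow> W i | Inr i \<Rightarrow> Y i) \<omega>))
    = ennreal (exp (- a * arrival W n \<omega>))"
proof -
  have "(\<Prod>k\<in>Inl ` {..n}. gfun a k ((case k of Inl i \<Rightarrow> W i | Inr i \<Rightarrow> Y i) \<omega>))
      = (\<Prod>i\<in>{..n}. ennreal (exp (- a * W i \<omega>)))"
    by (subst prod.reindex) (auto simp: gfun_def inj_on_def)
  also have "\<dots> = ennreal (\<Prod>i\<in>{..n}. exp (- a * W i \<omega>))" by (rule prod_ennreal) simp
  also have "(\<Prod>i\<in>{..n}. exp (- a * W i \<omega>)) = exp (\<Sum>i\<in>{..n}. - a * W i \<omega>)" by (simp add: exp_sum)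
  also have "(\<Sum>i\<in>{..n}. - a * W i \<omega>) = - a * arrival W n \<omega>"
    by (simp add: arrival_def sum_distrib_left)
  finally show ?thesis .
qed

lemma exp_S: assumes a: "0 \<le> a"
  shows "(\<integral>\<^sup>+\<omega>. ennreal (exp (- a * arrival W n \<omega>)) \<partial>M) = ennreal ((lam / (lam + a)) ^ Suc n)"
proof -
  let ?Z = "\<lambda>k \<omega>. gfun a k ((case k of Inl i \<Rightarrow> W i | Inr i \<Rightarrow> Y i) \<omega>)"
  have "(\<integral>\<^sup>+\<omega>. (\<Prod>k\<in>Inl ` {..n}. ?Z k \<omega>) \<partial>M) = (\<Prod>k\<in>Inl ` {..n}. \<integral>\<^sup>+\<omega>. ?Z k \<omega> \<partial>M)"
    by (rule indep_vars_nn_integral) (auto intro: indep_g)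
  also have "\<dots> = (\<Prod>i\<in>{..n}. ennreal (lam / (lam + a)))"
    by (subst prod.reindex) (auto simp: gfun_def inj_on_def exp_W'[OF a])
  also have "\<dots> = ennreal ((lam / (lam + a)) ^ Suc n)"
  proof -
    have c0: "0 \<le> lam / (lam + a)" using lam a by simp
    show ?thesis by (simp only: prod_constant card_atMost ennreal_power[OF c0])
  qed
  finally show ?thesis by (simp add: prod_Inl)
qed

lemma exp_YS: assumes a: "0 \<le> a"
  shows "(\<integral>\<^sup>+\<omega>. ennreal (Y n \<omega>) * ennreal (exp (- a * arrival W n \<omega>)) \<partial>M)
       = ennreal (integral\<^sup>L M (Y 0)) * ennreal ((lam / (lam + a)) ^ Suc n)"
proof -
  let ?Z = "\<lambda>k \<omega>. gfun a k ((case k of Inl i \<Rightarrow> W i | Inr i \<Rightarrow> Y i) \<omega>)"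
  let ?I = "insert (Inr n) (Inl ` {..n})"
  have nI: "Inr n \<notin> Inl ` {..n}" by auto
  have "(\<integral>\<^sup>+\<omega>. (\<Prod>k\<in>?I. ?Z k \<omega>) \<partial>M) = (\<Prod>k\<in>?I. \<integral>\<^sup>+\<omega>. ?Z k \<omega> \<partial>M)"
    by (rule indep_vars_nn_integral) (auto intro: indep_g)
  also have "\<dots> = (\<integral>\<^sup>+\<omega>. ennreal (Y n \<omega>) \<partial>M) * (\<Prod>k\<in>Inl ` {..n}. \<integral>\<^sup>+\<omega>. ?Z k \<omega> \<partial>M)"
    using nI by (simp add: gfun_def)
  also have "(\<Prod>k\<in>Inl ` {..n}. \<integral>\<^sup>+\<omega>. ?Z k \<omega> \<partial>M) = (\<Prod>i\<in>{..n}. ennreal (lam / (lam + a)))"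
    by (subst prod.reindex) (auto simp: gfun_def inj_on_def exp_W'[OF a])
  also have "\<dots> = ennreal ((lam / (lam + a)) ^ Suc n)"
  proof -
    have c0: "0 \<le> lam / (lam + a)" using lam a by simp
    show ?thesis by (simp only: prod_constant card_atMost ennreal_power[OF c0])
  qed
  finally have eq: "(\<integral>\<^sup>+\<omega>. (\<Prod>k\<in>?I. ?Z k \<omega>) \<partial>M) = ennreal (integral\<^sup>L M (Y 0)) * ennreal ((lam / (lam + a)) ^ Suc n)"
    by (simp add: mY_nn)
  have "(\<Prod>k\<in>?I. ?Z k \<omega>) = ennreal (Y n \<omega>) * ennreal (exp (- a * arrival W n \<omega>))" for \<omega>
    using nI prod_Inl[where a=a and n=n and \<omega>=\<omega>] by (simp add: gfun_def)
  thus ?thesis using eq by simp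
qed

end

lemma fin_from_summable:
  fixes s :: "nat \<Rightarrow> real"
  assumes "summable (\<lambda>n. exp (- s n))"
  shows "finite {n. s n \<le> t}"
proof -
  have "(\<lambda>n. exp (- s n)) \<longlonglongrightarrow> 0" by (rule summable_LIMSEQ_zero[OF assms])
  hence "eventually (\<lambda>n. exp (- s n) < exp (- t)) sequentially"
    by (rule order_tendstoD) simp
  then obtain N where N: "\<And>n. N \<le> n \<Longrightarrow> exp (- s n) < exp (- t)"
    unfolding eventually_sequentially by blast
  have "{n. s n \<le> t} \<subseteq> {..<N}"
  proof
    fix n assume "n \<in> {n. s n \<le> t}"
    hence "exp (- t) \<le> exp (- s n)" by simp
    thus "n \<in> {..<N}" using N[of n] by (cases "N \<le> n") auto
  qed
  thus ?thesis by (rule finite_subset) simp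
qed

lemma geom_suc_sum:
  fixes q :: real
  assumes "0 \<le> q" "q < 1"
  shows "(\<Sum>n. ennreal (q ^ Suc n)) = ennreal (q / (1 - q))"
proof (rule suminf_ennreal_eq)
  show "\<And>n. 0 \<le> q ^ Suc n" using assms by simp
  have "(\<lambda>n. q ^ n) sums (1 / (1 - q))" by (rule geometric_sums) (use assms in auto)
  hence "(\<lambda>n. q * q ^ n) sums (q * (1 / (1 - q)))" by (rule sums_mult)
  thus "(\<lambda>n. q ^ Suc n) sums (q / (1 - q))" by simp
qed

context dual_model begin

lemma mY_nonneg: "0 \<le> integral\<^sup>L M (Y 0)"
  by (rule integral_nonneg_AE) (use AE_Y_pos[of 0] in \<open>auto elim: AE_mp\<close>)

lemma q_props: assumes "0 < a" shows "0 \<le> lam / (lam + a)" "lam / (lam + a) < 1"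
  using lam assms by auto

lemma AE_fin: "AE \<omega> in M. \<forall>t. finite {n. arrival W n \<omega> \<le> t}"
proof -
  have m: "(\<lambda>\<omega>. \<Sum>n. ennreal (exp (- 1 * arrival W n \<omega>))) \<in> borel_measurable M" by measurable
  have "(\<integral>\<^sup>+\<omega>. (\<Sum>n. ennreal (exp (- 1 * arrival W n \<omega>))) \<partial>M) = (\<Sum>n. \<integral>\<^sup>+\<omega>. ennreal (exp (- 1 * arrival W n \<omega>)) \<partial>M)"
    by (rule nn_integral_suminf) measurable
  also have "\<dots> = (\<Sum>n. ennreal ((lam / (lam + 1)) ^ Suc n))"
    by (simp only: exp_S[of 1] zero_le_one)
  also have "\<dots> = ennreal ((lam / (lam + 1)) / (1 - lam / (lam + 1)))"
    by (rule geom_suc_sum) (use q_props[of 1] in auto)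
  finally have "(\<integral>\<^sup>+\<omega>. (\<Sum>n. ennreal (exp (- 1 * arrival W n \<omega>))) \<partial>M) \<noteq> \<infinity>" by simp
  hence "AE \<omega> in M. (\<Sum>n. ennreal (exp (- 1 * arrival W n \<omega>))) \<noteq> \<infinity>"
    by (rule nn_integral_noteq_infinite[OF m])
  thus ?thesis
  proof (rule AE_mp, intro AE_I2 impI allI)
    fix \<omega> t assume "(\<Sum>n. ennreal (exp (- 1 * arrival W n \<omega>))) \<noteq> \<infinity>"
    hence "summable (\<lambda>n. exp (- 1 * arrival W n \<omega>))"
      by (intro summable_suminf_not_top) auto
    thus "finite {n. arrival W n \<omega> \<le> t}" using fin_from_summable[of "\<lambda>n. arrival W n \<omega>" t] by simp
  qed
qed

lemma AE_good: "AE \<omega> in M. good W Y \<omega>"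
proof -
  have "AE \<omega> in M. \<forall>i. 0 < W i \<omega>" using AE_W_pos by (simp add: AE_all_countable)
  moreover have "AE \<omega> in M. \<forall>i. 0 < Y i \<omega>" using AE_Y_pos by (simp add: AE_all_countable)
  ultimately show ?thesis using AE_fin by eventually_elim (simp add: good_def)
qed

lemma Vterm_meas[measurable]: "(\<lambda>\<omega>. ennreal (Y n \<omega>) * fH H \<delta> (arrival W n \<omega>)) \<in> borel_measurable M"
proof -
  have "(\<lambda>\<omega>. fH H \<delta> (arrival W n \<omega>)) \<in> borel_measurable M"
    by (rule measurable_compose[OF arrival_meas fH_meas])
  thus ?thesis by measurable
qed

lemma Vpath_int: "(\<integral>\<^sup>+\<omega>. Vpath W Y H \<delta> \<omega> \<partial>M) = (\<Sum>n. \<integral>\<^sup>+\<omega>. ennreal (Y n \<omega>) * fH H \<delta> (arrival W n \<omega>) \<partial>M)"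
  unfolding Vpath_def by (rule nn_integral_suminf) simp

lemma Z_inf: assumes d: "0 < \<delta>"
  shows "(\<integral>\<^sup>+\<omega>. Vpath W Y \<infinity> \<delta> \<omega> \<partial>M) = ennreal (lam * integral\<^sup>L M (Y 0) / \<delta>)"
proof -
  have "(\<integral>\<^sup>+\<omega>. ennreal (Y n \<omega>) * fH \<infinity> \<delta> (arrival W n \<omega>) \<partial>M)
      = (\<integral>\<^sup>+\<omega>. ennreal (Y n \<omega>) * ennreal (exp (- \<delta> * arrival W n \<omega>)) \<partial>M)" for n
  proof (rule nn_integral_cong_AE)
    show "AE \<omega> in M. ennreal (Y n \<omega>) * fH \<infinity> \<delta> (arrival W n \<omega>) = ennreal (Y n \<omega>) * ennreal (exp (- \<delta> * arrival W n \<omega>))"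
      using AE_good
    proof eventually_elim
      case (elim \<omega>)
      have "0 \<le> arrival W n \<omega>" using less_imp_le[OF good_arrival_pos[OF elim]] .
      thus ?case by (simp add: fH_def)
    qed
  qed
  hence "(\<integral>\<^sup>+\<omega>. Vpath W Y \<infinity> \<delta> \<omega> \<partial>M) = (\<Sum>n. ennreal (integral\<^sup>L M (Y 0)) * ennreal ((lam / (lam + \<delta>)) ^ Suc n))"
    unfolding Vpath_int using exp_YS[of \<delta>] d by simp
  also have "\<dots> = ennreal (integral\<^sup>L M (Y 0)) * ennreal ((lam / (lam + \<delta>)) / (1 - lam / (lam + \<delta>)))"
    using geom_suc_sum[OF q_props[OF d]] by simp
  also have "(lam / (lam + \<delta>)) / (1 - lam / (lam + \<delta>)) = lam / \<delta>"
  proof -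
    have p: "lam + \<delta> \<noteq> 0" using lam d by simp
    have "1 - lam / (lam + \<delta>) = \<delta> / (lam + \<delta>)" using p by (simp add: field_simps)
    thus ?thesis using p d by simp
  qed
  also have "ennreal (integral\<^sup>L M (Y 0)) * ennreal (lam / \<delta>) = ennreal (lam * integral\<^sup>L M (Y 0) / \<delta>)"
    using lam d mY_nonneg by (simp add: ennreal_mult''[symmetric] ennreal_mult'[symmetric])
  finally show ?thesis .
qed

lemma Z_fin: assumes d: "0 \<le> \<delta>"
  shows "(\<integral>\<^sup>+\<omega>. Vpath W Y (ereal T) \<delta> \<omega> \<partial>M) < \<infinity>"
proof -
  have le: "(\<integral>\<^sup>+\<omega>. ennreal (Y n \<omega>) * fH (ereal T) \<delta> (arrival W n \<omega>) \<partial>M)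
      \<le> (\<integral>\<^sup>+\<omega>. ennreal (exp T) * (ennreal (Y n \<omega>) * ennreal (exp (- 1 * arrival W n \<omega>))) \<partial>M)" for n
  proof (rule nn_integral_mono_AE)
    show "AE \<omega> in M. ennreal (Y n \<omega>) * fH (ereal T) \<delta> (arrival W n \<omega>) \<le> ennreal (exp T) * (ennreal (Y n \<omega>) * ennreal (exp (- 1 * arrival W n \<omega>)))"
      using AE_good
    proof eventually_elim
      case (elim \<omega>)
      let ?s = "arrival W n \<omega>"
      have s0: "0 < ?s" using good_arrival_pos[OF elim] .
      have "fH (ereal T) \<delta> ?s \<le> ennreal (exp T) * ennreal (exp (- 1 * ?s))"
      proof (cases "?s \<le> T")
        case True
        have "exp (- \<delta> * ?s) \<le> 1" using d s0 by simp
        also have "1 \<le> exp T * exp (- 1 * ?s)" using True by (simp add: exp_add[symmetric])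
        finally show ?thesis using True s0
          by (simp add: fH_def ennreal_mult''[symmetric] ennreal_leI)
      qed (simp add: fH_def)
      hence "ennreal (Y n \<omega>) * fH (ereal T) \<delta> ?s \<le> ennreal (Y n \<omega>) * (ennreal (exp T) * ennreal (exp (- 1 * ?s)))"
        by (rule mult_left_mono) simp
      thus ?case by (simp add: mult_ac)
    qed
  qed
  have "(\<integral>\<^sup>+\<omega>. Vpath W Y (ereal T) \<delta> \<omega> \<partial>M)
      \<le> (\<Sum>n. \<integral>\<^sup>+\<omega>. ennreal (exp T) * (ennreal (Y n \<omega>) * ennreal (exp (- 1 * arrival W n \<omega>))) \<partial>M)"
    unfolding Vpath_int by (rule suminf_le) (use le in auto)
  also have "\<dots> = (\<Sum>n. ennreal (exp T) * (ennreal (integral\<^sup>L M (Y 0)) * ennreal ((lam / (lam + 1)) ^ Suc n)))"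
    using exp_YS[of 1] by (simp add: nn_integral_cmult)
  also have "\<dots> = ennreal (exp T) * (ennreal (integral\<^sup>L M (Y 0)) * ennreal ((lam / (lam + 1)) / (1 - lam / (lam + 1))))"
    using geom_suc_sum[OF q_props[of 1]] by simp
  also have "\<dots> < \<infinity>" by (simp add: ennreal_mult_less_top)
  finally show ?thesis .
qed

end

context dual_model begin

lemma Vpath_meas[measurable]: "(\<lambda>\<omega>. Vpath W Y H \<delta> \<omega>) \<in> borel_measurable M"
  unfolding Vpath_def by measurable

lemma nn_const: "(\<integral>\<^sup>+\<omega>. ennreal c \<partial>M) = ennreal c"
  by (simp add: emeasure_space_1)

lemma admissible_path: "admissible M J D \<Longrightarrow> \<omega> \<in> space M \<Longrightarrow> path (D \<omega>)"
  unfolding admissible_def path_def by blast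

lemma div_upper:
  assumes D: "admissible M (cpp W Y) D" and x: "0 < x" and \<delta>: "0 \<le> \<delta>" and H: "0 \<le> H"
  shows "div_value M x (cpp W Y) \<delta> H D \<le> ennreal x + (\<integral>\<^sup>+\<omega>. Vpath W Y H \<delta> \<omega> \<partial>M)"
proof -
  have "div_value M x (cpp W Y) \<delta> H D \<le> (\<integral>\<^sup>+\<omega>. ennreal x + Vpath W Y H \<delta> \<omega> \<partial>M)"
    unfolding div_value_def
  proof (rule nn_integral_mono_AE)
    show "AE \<omega> in M. (\<integral>\<^sup>+t. indicator {t. 0 \<le> t \<and> ereal t \<le> H \<and> ereal t < ruin_time x (cpp W Y) D \<omega>} t
            * ennreal (exp (- \<delta> * t)) \<partial>stieltjes (D \<omega>)) \<le> ennreal x + Vpath W Y H \<delta> \<omega>"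
      using AE_good AE_space
    proof eventually_elim
      case (elim \<omega>)
      show ?case using upper_path[where W=W and Y=Y and \<omega>=\<omega> and D=D and x=x and \<delta>=\<delta> and H=H]
          elim(1) admissible_path[OF D elim(2)] x \<delta> H by blast
    qed
  qed
  also have "\<dots> = ennreal x + (\<integral>\<^sup>+\<omega>. Vpath W Y H \<delta> \<omega> \<partial>M)"
    by (subst nn_integral_add) (auto simp: nn_const emeasure_space_1)
  finally show ?thesis .
qed

lemma div_eps:
  assumes e: "0 < \<epsilon>" "\<epsilon> < x" and H: "0 \<le> H"
  shows "div_value M x (cpp W Y) \<delta> H (eps_strategy x \<epsilon> (cpp W Y)) = ennreal (x - \<epsilon>) + (\<integral>\<^sup>+\<omega>. Vpath W Y H \<delta> \<omega> \<partial>M)"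
proof -
  have "div_value M x (cpp W Y) \<delta> H (eps_strategy x \<epsilon> (cpp W Y)) = (\<integral>\<^sup>+\<omega>. ennreal (x - \<epsilon>) + Vpath W Y H \<delta> \<omega> \<partial>M)"
    unfolding div_value_def
  proof (rule nn_integral_cong_AE)
    show "AE \<omega> in M. (\<integral>\<^sup>+t. indicator {t. 0 \<le> t \<and> ereal t \<le> H \<and> ereal t < ruin_time x (cpp W Y) (eps_strategy x \<epsilon> (cpp W Y)) \<omega>} t
            * ennreal (exp (- \<delta> * t)) \<partial>stieltjes (eps_strategy x \<epsilon> (cpp W Y) \<omega>)) = ennreal (x - \<epsilon>) + Vpath W Y H \<delta> \<omega>"
      using AE_good
    proof eventually_elim
      case (elim \<omega>)
      show ?case by (rule eps_value_path[OF elim e H])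
    qed
  qed
  also have "\<dots> = ennreal (x - \<epsilon>) + (\<integral>\<^sup>+\<omega>. Vpath W Y H \<delta> \<omega> \<partial>M)"
    by (subst nn_integral_add) (auto simp: nn_const emeasure_space_1)
  finally show ?thesis .
qed

lemma div_grid:
  assumes h: "0 < h" and e: "0 < \<epsilon>" "\<epsilon> < x" and \<delta>: "0 \<le> \<delta>"
    and H: "H = \<infinity> \<or> (\<exists>N::nat. H = ereal (real N * h))"
  shows "ennreal (x - \<epsilon>) + ennreal (exp (- \<delta> * h)) * (\<integral>\<^sup>+\<omega>. Vpath W Y H \<delta> \<omega> \<partial>M)
      \<le> opt_value M x (cpp W Y) \<delta> H"
proof -
  have "ennreal (x - \<epsilon>) + ennreal (exp (- \<delta> * h)) * (\<integral>\<^sup>+\<omega>. Vpath W Y H \<delta> \<omega> \<partial>M)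
      = (\<integral>\<^sup>+\<omega>. ennreal (x - \<epsilon>) + ennreal (exp (- \<delta> * h)) * Vpath W Y H \<delta> \<omega> \<partial>M)"
    by (subst nn_integral_add) (auto simp: nn_const nn_integral_cmult emeasure_space_1)
  also have "\<dots> \<le> div_value M x (cpp W Y) \<delta> H (grid_strategy x \<epsilon> h (cpp W Y))"
    unfolding div_value_def
  proof (rule nn_integral_mono_AE)
    show "AE \<omega> in M. ennreal (x - \<epsilon>) + ennreal (exp (- \<delta> * h)) * Vpath W Y H \<delta> \<omega> \<le>
        (\<integral>\<^sup>+t. indicator {t. 0 \<le> t \<and> ereal t \<le> H \<and> ereal t < ruin_time x (cpp W Y) (grid_strategy x \<epsilon> h (cpp W Y)) \<omega>} t
            * ennreal (exp (- \<delta> * t)) \<partial>stieltjes (grid_strategy x \<epsilon> h (cpp W Y) \<omega>))"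
      using AE_good
    proof eventually_elim
      case (elim \<omega>)
      show ?case by (rule grid_value_path[OF elim h e \<delta> H])
    qed
  qed
  also have "\<dots> \<le> opt_value M x (cpp W Y) \<delta> H"
    unfolding opt_value_def
    by (rule SUP_upper) (use grid_admissible[OF h e(2)] in simp)
  finally show ?thesis .
qed

lemma opt_eq:
  assumes x: "0 < x" and \<delta>: "0 \<le> \<delta>" and c: "0 < c"
    and H: "H = \<infinity> \<or> H = ereal c"
    and Zfin: "(\<integral>\<^sup>+\<omega>. Vpath W Y H \<delta> \<omega> \<partial>M) < \<infinity>"
  shows "opt_value M x (cpp W Y) \<delta> H = ennreal x + (\<integral>\<^sup>+\<omega>. Vpath W Y H \<delta> \<omega> \<partial>M)"
proof (rule antisym)
  have H0: "0 \<le> H" using H c by (auto simp: zero_ereal_def)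
  show "opt_value M x (cpp W Y) \<delta> H \<le> ennreal x + (\<integral>\<^sup>+\<omega>. Vpath W Y H \<delta> \<omega> \<partial>M)"
    unfolding opt_value_def by (rule SUP_least) (use div_upper[OF _ x \<delta> H0] in auto)
  obtain z where z: "(\<integral>\<^sup>+\<omega>. Vpath W Y H \<delta> \<omega> \<partial>M) = ennreal z" "0 \<le> z"
    using Zfin by (cases "(\<integral>\<^sup>+\<omega>. Vpath W Y H \<delta> \<omega> \<partial>M)") auto
  define a where "a N = x - x / 2 * inverse (real (Suc N)) + exp (- \<delta> * (c * inverse (real (Suc N)))) * z" for N
  have lim: "a \<longlonglongrightarrow> x - x / 2 * 0 + exp (- \<delta> * (c * 0)) * z"
    unfolding a_def by (intro tendsto_intros LIMSEQ_inverse_real_of_nat)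
  have le: "ennreal (a N) \<le> opt_value M x (cpp W Y) \<delta> H" for N
  proof -
    define h where "h = c * inverse (real (Suc N))"
    define \<epsilon> where "\<epsilon> = x / 2 * inverse (real (Suc N))"
    have h0: "0 < h" using c by (simp add: h_def)
    have "inverse (real (Suc N)) \<le> 1" by (simp add: inverse_le_1_iff)
    hence "x / 2 * inverse (real (Suc N)) \<le> x / 2 * 1" by (rule mult_left_mono) (use x in auto)
    hence e0: "0 < \<epsilon>" "\<epsilon> < x" using x by (auto simp: \<epsilon>_def)
    have HN: "H = \<infinity> \<or> (\<exists>N::nat. H = ereal (real N * h))"
      using H by (auto simp: h_def intro!: exI[of _ "Suc N"])
    have aN: "a N = (x - \<epsilon>) + exp (- \<delta> * h) * z" by (simp add: a_def h_def \<epsilon>_def)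
    have "ennreal (a N) = ennreal (x - \<epsilon>) + ennreal (exp (- \<delta> * h) * z)"
      unfolding aN using e0 z(2) by (intro ennreal_plus) auto
    also have "ennreal (exp (- \<delta> * h) * z) = ennreal (exp (- \<delta> * h)) * ennreal z"
      using z(2) by (intro ennreal_mult) auto
    finally have "ennreal (a N) = ennreal (x - \<epsilon>) + ennreal (exp (- \<delta> * h)) * ennreal z" .
    also have "\<dots> \<le> opt_value M x (cpp W Y) \<delta> H"
      using div_grid[OF h0 e0 \<delta> HN] z(1) by simp
    finally show ?thesis .
  qed
  have "(\<lambda>N. ennreal (a N)) \<longlonglongrightarrow> ennreal (x + z)"
    using tendsto_ennrealI[OF lim] by simp
  hence "ennreal (x + z) \<le> opt_value M x (cpp W Y) \<delta> H"
    by (rule LIMSEQ_le_const2) (use le in auto)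
  thus "ennreal x + (\<integral>\<^sup>+\<omega>. Vpath W Y H \<delta> \<omega> \<partial>M) \<le> opt_value M x (cpp W Y) \<delta> H"
    using z x by (simp add: ennreal_plus)
qed

lemma final_H:
  assumes x: "0 < x" and \<delta>: "0 \<le> \<delta>" and c: "0 < c"
    and H: "H = \<infinity> \<or> H = ereal c"
    and Zfin: "(\<integral>\<^sup>+\<omega>. Vpath W Y H \<delta> \<omega> \<partial>M) < \<infinity>"
  shows "opt_value M x (cpp W Y) \<delta> H = ennreal x + (\<integral>\<^sup>+\<omega>. Vpath W Y H \<delta> \<omega> \<partial>M)"
    and "opt_value M x (cpp W Y) \<delta> H < \<top>"
    and "\<forall>e>0. \<exists>\<epsilon>. 0 < \<epsilon> \<and> \<epsilon> < x \<and>
           div_value M x (cpp W Y) \<delta> H (eps_strategy x \<epsilon> (cpp W Y)) \<le> opt_value M x (cpp W Y) \<delta> H \<and>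
           opt_value M x (cpp W Y) \<delta> H < div_value M x (cpp W Y) \<delta> H (eps_strategy x \<epsilon> (cpp W Y)) + ennreal e"
proof -
  have H0: "0 \<le> H" using H c by (auto simp: zero_ereal_def)
  note O = opt_eq[OF x \<delta> c H Zfin]
  show "opt_value M x (cpp W Y) \<delta> H = ennreal x + (\<integral>\<^sup>+\<omega>. Vpath W Y H \<delta> \<omega> \<partial>M)" by (rule O)
  obtain z where z: "(\<integral>\<^sup>+\<omega>. Vpath W Y H \<delta> \<omega> \<partial>M) = ennreal z" "0 \<le> z"
    using Zfin by (cases "(\<integral>\<^sup>+\<omega>. Vpath W Y H \<delta> \<omega> \<partial>M)") auto
  show "opt_value M x (cpp W Y) \<delta> H < \<top>" using O z by simp
  show "\<forall>e>0. \<exists>\<epsilon>. 0 < \<epsilon> \<and> \<epsilon> < x \<and>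
           div_value M x (cpp W Y) \<delta> H (eps_strategy x \<epsilon> (cpp W Y)) \<le> opt_value M x (cpp W Y) \<delta> H \<and>
           opt_value M x (cpp W Y) \<delta> H < div_value M x (cpp W Y) \<delta> H (eps_strategy x \<epsilon> (cpp W Y)) + ennreal e"
  proof (intro allI impI)
    fix e :: real assume e: "0 < e"
    define \<epsilon> where "\<epsilon> = min (x / 2) (e / 2)"
    have e0: "0 < \<epsilon>" "\<epsilon> < x" "\<epsilon> < e" using x e by (auto simp: \<epsilon>_def)
    have dv: "div_value M x (cpp W Y) \<delta> H (eps_strategy x \<epsilon> (cpp W Y)) = ennreal (x - \<epsilon> + z)"
      using div_eps[OF e0(1,2) H0, of \<delta>] z e0 by (simp add: ennreal_plus)
    have ov: "opt_value M x (cpp W Y) \<delta> H = ennreal (x + z)"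
      using O z x by (simp add: ennreal_plus)
    have "ennreal (x - \<epsilon> + z) \<le> ennreal (x + z)" using e0 by (intro ennreal_leI) simp
    moreover have "ennreal (x + z) < ennreal (x - \<epsilon> + z) + ennreal e"
    proof -
      have "ennreal (x - \<epsilon> + z) + ennreal e = ennreal (x - \<epsilon> + z + e)"
        using e0 z e by (simp add: ennreal_plus)
      moreover have "ennreal (x + z) < ennreal (x - \<epsilon> + z + e)"
        using e0 z x by (subst ennreal_less_iff) auto
      ultimately show ?thesis by simp
    qed
    ultimately show "\<exists>\<epsilon>. 0 < \<epsilon> \<and> \<epsilon> < x \<and>
           div_value M x (cpp W Y) \<delta> H (eps_strategy x \<epsilon> (cpp W Y)) \<le> opt_value M x (cpp W Y) \<delta> H \<and>
           opt_value M x (cpp W Y) \<delta> H < div_value M x (cpp W Y) \<delta> H (eps_strategy x \<epsilon> (cpp W Y)) + ennreal e"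
      using e0 dv ov by (intro exI[of _ \<epsilon>]) simp
  qed
qed

end

theorem proposition2p11:
  fixes M :: "'a measure" and W Y :: "nat \<Rightarrow> 'a \<Rightarrow> real"
    and p :: "real \<Rightarrow> real" and lam x :: real
  assumes "prob_space M"
    and "lam > 0" and "x > 0"
    and "prob_space.indep_vars M (\<lambda>_. borel)
           (\<lambda>k. case k of Inl i \<Rightarrow> W i | Inr i \<Rightarrow> Y i) UNIV"
    and "\<And>i. distributed M lborel (W i) (\<lambda>t. ennreal (exponential_density lam t))"
    and "p \<in> borel_measurable borel" and "\<And>y. 0 \<le> p y" and "\<And>y. y \<le> 0 \<Longrightarrow> p y = 0"
    and "\<And>i. distributed M lborel (Y i) (\<lambda>y. ennreal (p y))"
    and "integrable M (Y 0)"
  shows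
    "(\<forall>\<delta>>0. opt_value M x (cpp W Y) \<delta> \<infinity> = ennreal (x + lam * integral\<^sup>L M (Y 0) / \<delta>) \<and>
        (\<forall>e>0. \<exists>\<epsilon>. 0 < \<epsilon> \<and> \<epsilon> < x \<and>
           div_value M x (cpp W Y) \<delta> \<infinity> (eps_strategy x \<epsilon> (cpp W Y))
             \<le> opt_value M x (cpp W Y) \<delta> \<infinity> \<and>
           opt_value M x (cpp W Y) \<delta> \<infinity>
             < div_value M x (cpp W Y) \<delta> \<infinity> (eps_strategy x \<epsilon> (cpp W Y)) + ennreal e))
   \<and> (\<forall>\<delta>>0. \<forall>T>0. opt_value M x (cpp W Y) \<delta> (ereal T) < \<top> \<and>
        (\<forall>e>0. \<exists>\<epsilon>. 0 < \<epsilon> \<and> \<epsilon> < x \<and>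
           div_value M x (cpp W Y) \<delta> (ereal T) (eps_strategy x \<epsilon> (cpp W Y))
             \<le> opt_value M x (cpp W Y) \<delta> (ereal T) \<and>
           opt_value M x (cpp W Y) \<delta> (ereal T)
             < div_value M x (cpp W Y) \<delta> (ereal T) (eps_strategy x \<epsilon> (cpp W Y)) + ennreal e))
   \<and> (\<forall>T>0. opt_value M x (cpp W Y) 0 (ereal T) < \<top> \<and>
        (\<forall>e>0. \<exists>\<epsilon>. 0 < \<epsilon> \<and> \<epsilon> < x \<and>
           div_value M x (cpp W Y) 0 (ereal T) (eps_strategy x \<epsilon> (cpp W Y))
             \<le> opt_value M x (cpp W Y) 0 (ereal T) \<and>
           opt_value M x (cpp W Y) 0 (ereal T)
             < div_value M x (cpp W Y) 0 (ereal T) (eps_strategy x \<epsilon> (cpp W Y)) + ennreal e))"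
  proof -
  interpret dual_model M W Y p lam
    by (intro dual_model.intro dual_model_axioms.intro) (use assms in simp_all)
  have A: "\<forall>\<delta>>0. opt_value M x (cpp W Y) \<delta> \<infinity> = ennreal (x + lam * integral\<^sup>L M (Y 0) / \<delta>) \<and>
        (\<forall>e>0. \<exists>\<epsilon>. 0 < \<epsilon> \<and> \<epsilon> < x \<and>
           div_value M x (cpp W Y) \<delta> \<infinity> (eps_strategy x \<epsilon> (cpp W Y))
             \<le> opt_value M x (cpp W Y) \<delta> \<infinity> \<and>
           opt_value M x (cpp W Y) \<delta> \<infinity>
             < div_value M x (cpp W Y) \<delta> \<infinity> (eps_strategy x \<epsilon> (cpp W Y)) + ennreal e)"
  proof (rule allI, rule impI, rule conjI)
    fix \<delta> :: real assume d: "0 < \<delta>"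
    have Zf: "(\<integral>\<^sup>+\<omega>. Vpath W Y \<infinity> \<delta> \<omega> \<partial>M) < \<infinity>" using Z_inf[OF d] by simp
    note F = final_H[OF assms(3) less_imp_le[OF d] zero_less_one _ Zf]
    have nn: "0 \<le> lam * integral\<^sup>L M (Y 0) / \<delta>" using lam mY_nonneg d by simp
    show "opt_value M x (cpp W Y) \<delta> \<infinity> = ennreal (x + lam * integral\<^sup>L M (Y 0) / \<delta>)"
      using F(1) Z_inf[OF d] assms(3) nn by (simp add: ennreal_plus)
    show "\<forall>e>0. \<exists>\<epsilon>. 0 < \<epsilon> \<and> \<epsilon> < x \<and>
           div_value M x (cpp W Y) \<delta> \<infinity> (eps_strategy x \<epsilon> (cpp W Y))
             \<le> opt_value M x (cpp W Y) \<delta> \<infinity> \<and>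
           opt_value M x (cpp W Y) \<delta> \<infinity>
             < div_value M x (cpp W Y) \<delta> \<infinity> (eps_strategy x \<epsilon> (cpp W Y)) + ennreal e"
      using F(3) by simp
  qed
  have B: "\<forall>\<delta>\<ge>0. \<forall>T>0. opt_value M x (cpp W Y) \<delta> (ereal T) < \<top> \<and>
        (\<forall>e>0. \<exists>\<epsilon>. 0 < \<epsilon> \<and> \<epsilon> < x \<and>
           div_value M x (cpp W Y) \<delta> (ereal T) (eps_strategy x \<epsilon> (cpp W Y))
             \<le> opt_value M x (cpp W Y) \<delta> (ereal T) \<and>
           opt_value M x (cpp W Y) \<delta> (ereal T)
             < div_value M x (cpp W Y) \<delta> (ereal T) (eps_strategy x \<epsilon> (cpp W Y)) + ennreal e)"
  proof (rule allI, rule impI, rule allI, rule impI, rule conjI)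
    fix \<delta> T :: real assume d: "0 \<le> \<delta>" and T: "0 < T"
    note F = final_H[OF assms(3) d T _ Z_fin[OF d, of T]]
    show "opt_value M x (cpp W Y) \<delta> (ereal T) < \<top>" using F(2) by simp
    show "\<forall>e>0. \<exists>\<epsilon>. 0 < \<epsilon> \<and> \<epsilon> < x \<and>
           div_value M x (cpp W Y) \<delta> (ereal T) (eps_strategy x \<epsilon> (cpp W Y))
             \<le> opt_value M x (cpp W Y) \<delta> (ereal T) \<and>
           opt_value M x (cpp W Y) \<delta> (ereal T)
             < div_value M x (cpp W Y) \<delta> (ereal T) (eps_strategy x \<epsilon> (cpp W Y)) + ennreal e"
      using F(3) by simp
  qed
  have B': "\<forall>\<delta>>0. \<forall>T>0. opt_value M x (cpp W Y) \<delta> (ereal T) < \<top> \<and>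
        (\<forall>e>0. \<exists>\<epsilon>. 0 < \<epsilon> \<and> \<epsilon> < x \<and>
           div_value M x (cpp W Y) \<delta> (ereal T) (eps_strategy x \<epsilon> (cpp W Y))
             \<le> opt_value M x (cpp W Y) \<delta> (ereal T) \<and>
           opt_value M x (cpp W Y) \<delta> (ereal T)
             < div_value M x (cpp W Y) \<delta> (ereal T) (eps_strategy x \<epsilon> (cpp W Y)) + ennreal e)"
  proof (intro allI impI)
    fix \<delta> T :: real assume "0 < \<delta>" "0 < T"
    thus "opt_value M x (cpp W Y) \<delta> (ereal T) < \<top> \<and>
        (\<forall>e>0. \<exists>\<epsilon>. 0 < \<epsilon> \<and> \<epsilon> < x \<and>
           div_value M x (cpp W Y) \<delta> (ereal T) (eps_strategy x \<epsilon> (cpp W Y))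
             \<le> opt_value M x (cpp W Y) \<delta> (ereal T) \<and>
           opt_value M x (cpp W Y) \<delta> (ereal T)
             < div_value M x (cpp W Y) \<delta> (ereal T) (eps_strategy x \<epsilon> (cpp W Y)) + ennreal e)"
      using B[rule_format, of \<delta> T] by simp
  qed
  have C: "\<forall>T>0. opt_value M x (cpp W Y) 0 (ereal T) < \<top> \<and>
        (\<forall>e>0. \<exists>\<epsilon>. 0 < \<epsilon> \<and> \<epsilon> < x \<and>
           div_value M x (cpp W Y) 0 (ereal T) (eps_strategy x \<epsilon> (cpp W Y))
             \<le> opt_value M x (cpp W Y) 0 (ereal T) \<and>
           opt_value M x (cpp W Y) 0 (ereal T)
             < div_value M x (cpp W Y) 0 (ereal T) (eps_strategy x \<epsilon> (cpp W Y)) + ennreal e)"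
  proof (intro allI impI)
    fix T :: real assume "0 < T"
    thus "opt_value M x (cpp W Y) 0 (ereal T) < \<top> \<and>
        (\<forall>e>0. \<exists>\<epsilon>. 0 < \<epsilon> \<and> \<epsilon> < x \<and>
           div_value M x (cpp W Y) 0 (ereal T) (eps_strategy x \<epsilon> (cpp W Y))
             \<le> opt_value M x (cpp W Y) 0 (ereal T) \<and>
           opt_value M x (cpp W Y) 0 (ereal T)
             < div_value M x (cpp W Y) 0 (ereal T) (eps_strategy x \<epsilon> (cpp W Y)) + ennreal e)"
      using B[rule_format, of 0 T] by simp
  qed
  show ?thesis using A B' C by (intro conjI)
qed

end
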